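(* For every integer $\kappa\geq 1$ and every $z\ge1$, \[ F_{\kappa+1}(z) \geq \frac{P(\kappa)}{P(\kappa+1)}\prod_{p\leq \kappa+1}\left(1-\frac{1}{p}\right)\sum_{\substack{\ell\leq z\\(\ell,P(\kappa+1))=1}}\mu^2(\ell)\frac{\tau_\kappa(\ell)}{\psi_{\kappa+1}(\ell)\,\ell}\int_1^{z/\ell}\frac{F_\kappa(t)}{t}\,dt.\]
   Context: For $y>0$ let $P(y)=\prod_{p\le y}p$. For an integer $k\ge1$ and $y>0$, $F_k(y)=\sum_{q\leq y,\ (q,P(k))=1}\mu^2(q)\prod_{p\mid q}\frac{k}{p-k}$. $\tau_n(m)$ is the number of ordered $n$-tuples $(d_1,\dots,d_n)$ of positive integers with $d_1\cdots d_n=m$, and $\psi_n(m)=\prod_{p\mid m,\ p>n}(p-n)$. *)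

theory Defs
  imports "HOL-Analysis.Analysis" "HOL-Computational_Algebra.Squarefree"
begin

definition primorial :: "real \<Rightarrow> nat" where
  "primorial y = (\<Prod>p\<in>{p::nat. prime p \<and> real p \<le> y}. p)"

text \<open>mu^2(q): square of the Moebius function, i.e. the indicator of squarefreeness.\<close>
definition mu2 :: "nat \<Rightarrow> real" where
  "mu2 q = (if squarefree q then 1 else 0)"

definition Fk :: "nat \<Rightarrow> real \<Rightarrow> real" where
  "Fk k y = (\<Sum>q\<in>{q::nat. 0 < q \<and> real q \<le> y \<and> coprime q (primorial (real k))}.
      mu2 q * (\<Prod>p\<in>prime_factors q. real k / (real p - real k)))"

definition tau :: "nat \<Rightarrow> nat \<Rightarrow> nat" where
  "tau n m = card {ds :: nat list. length ds = n \<and> (\<forall>d\<in>set ds. 0 < d) \<and> prod_list ds = m}"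

definition psi :: "nat \<Rightarrow> nat \<Rightarrow> real" where
  "psi n m = (\<Prod>p\<in>{p \<in> prime_factors m. n < p}. real p - real n)"

end

theory Submission imports Defs begin

lemma pf_prod:
  assumes "finite T" "\<forall>p\<in>T. prime (p::nat)"
  shows "prime_factors (\<Prod>p\<in>T. p) = T"
proof -
  have "0 \<notin> id ` T" using assms by auto
  hence "prime_factors (prod id T) = \<Union> ((prime_factors \<circ> id) ` T)"
    using prime_factors_prod[OF assms(1)] by blast
  also have "\<dots> = T" using assms(2) by (auto simp: prime_prime_factors)
  finally show ?thesis by simp
qed

lemma sqf_prod:
  assumes "finite T" "\<forall>p\<in>T. prime (p::nat)"
  shows "squarefree (\<Prod>p\<in>T. p)"
  apply (rule squarefree_prod_coprime)
  using assms by (auto simp: primes_coprime squarefree_prime)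

lemma prod_pf_sqf:
  assumes "squarefree (q::nat)"
  shows "(\<Prod>p\<in>prime_factors q. p) = q"
proof -
  have q: "q \<noteq> 0" using assms not_squarefree_0 by metis
  have "\<forall>p\<in>prime_factors q. multiplicity p q = 1"
    using assms q by (simp add: squarefree_factorial_semiring')
  hence "(\<Prod>p\<in>prime_factors q. p) = (\<Prod>p\<in>prime_factors q. p ^ multiplicity p q)"
    by (intro prod.cong) auto
  also have "\<dots> = q" using prod_prime_factors[OF q] by simp
  finally show ?thesis .
qed


lemma nat_le_floor: "real (n::nat) \<le> z \<Longrightarrow> n \<le> nat \<lfloor>z\<rfloor>"
proof -
  assume "real n \<le> z"
  hence "int n \<le> \<lfloor>z\<rfloor>" by (simp add: le_floor_iff)
  thus ?thesis by (simp add: le_nat_iff)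
qed

lemma fin_primes_le: "finite {p::nat. prime p \<and> real p \<le> y}"
  by (rule finite_subset[of _ "{..nat \<lfloor>y\<rfloor>}"]) (auto intro: nat_le_floor)

lemma coprime_primorial:
  assumes "0 < (q::nat)"
  shows "coprime q (primorial y) \<longleftrightarrow> (\<forall>p\<in>prime_factors q. y < real p)"
proof
  assume c: "coprime q (primorial y)"
  show "\<forall>p\<in>prime_factors q. y < real p"
  proof
    fix p assume p: "p \<in> prime_factors q"
    show "y < real p"
    proof (rule ccontr)
      assume "\<not> y < real p"
      hence "p dvd primorial y" unfolding primorial_def
        using p fin_primes_le[of y] by (intro dvd_prodI) auto
      moreover have "p dvd q" using p by auto
      ultimately have "p dvd 1" using c by (metis coprime_common_divisor)
      thus False using p by (metis in_prime_factors_imp_prime not_prime_unit)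
    qed
  qed
next
  assume h: "\<forall>p\<in>prime_factors q. y < real p"
  show "coprime q (primorial y)" unfolding primorial_def
  proof (rule prod_coprime_right)
    fix p assume p: "p \<in> {p::nat. prime p \<and> real p \<le> y}"
    show "coprime q p"
    proof (rule ccontr)
      assume "\<not> coprime q p"
      hence "p dvd q" using p by (metis coprime_commute mem_Collect_eq prime_imp_coprime)
      hence "p \<in> prime_factors q" using p assms by (auto simp: in_prime_factors_iff)
      thus False using h p by force
    qed
  qed
qed

definition SF :: "real \<Rightarrow> real \<Rightarrow> nat set set" where
  "SF y z = {T. finite T \<and> (\<forall>p\<in>T. prime p \<and> y < real p) \<and> (\<Prod>p\<in>T. real p) \<le> z}"

lemma prod_pos_primes: "\<forall>p\<in>T. prime (p::nat) \<Longrightarrow> 0 < (\<Prod>p\<in>T. p)"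
  by (metis prime_gt_0_nat prod_pos)

lemma mem_le_prod: "finite T \<Longrightarrow> \<forall>p\<in>T. prime (p::nat) \<Longrightarrow> p \<in> T \<Longrightarrow> p \<le> (\<Prod>p\<in>T. p)"
  by (intro dvd_imp_le dvd_prodI prod_pos_primes) auto

lemma SF_sub: "SF y z \<subseteq> Pow {..nat \<lfloor>z\<rfloor>}"
proof
  fix T assume T: "T \<in> SF y z"
  have "T \<subseteq> {..nat \<lfloor>z\<rfloor>}"
  proof
    fix p assume p: "p \<in> T"
    have "p \<le> (\<Prod>p\<in>T. p)" using T p mem_le_prod[of T p] unfolding SF_def by auto
    hence "real p \<le> real (\<Prod>p\<in>T. p)" by (simp only: of_nat_le_iff)
    also have "\<dots> = (\<Prod>p\<in>T. real p)" by simp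
    also have "\<dots> \<le> z" using T unfolding SF_def by auto
    finally have "real p \<le> z" .
    thus "p \<in> {..nat \<lfloor>z\<rfloor>}" by (auto intro: nat_le_floor)
  qed
  thus "T \<in> Pow {..nat \<lfloor>z\<rfloor>}" by auto
qed

lemma SF_fin: "finite (SF y z)"
  by (rule finite_subset[OF SF_sub]) auto

lemma G1:
  fixes f :: "nat \<Rightarrow> real"
  shows "(\<Sum>q\<in>{q::nat. 0 < q \<and> real q \<le> z \<and> coprime q (primorial y)}. mu2 q * f q)
       = (\<Sum>T\<in>SF y z. f (\<Prod>p\<in>T. p))"
proof -
  define A where "A = {q::nat. 0 < q \<and> real q \<le> z \<and> coprime q (primorial y)}"
  define B where "B = {q\<in>A. squarefree q}"
  have finA: "finite A" unfolding A_def
    by (rule finite_subset[of _ "{..nat \<lfloor>z\<rfloor>}"]) (auto intro: nat_le_floor)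
  have "(\<Sum>q\<in>A. mu2 q * f q) = (\<Sum>q\<in>B. mu2 q * f q)"
    by (rule sum.mono_neutral_right[OF finA]) (auto simp: B_def mu2_def)
  also have "\<dots> = (\<Sum>q\<in>B. f q)" by (rule sum.cong) (auto simp: B_def mu2_def)
  also have "B = (\<lambda>T. \<Prod>p\<in>T. p) ` SF y z"
  proof
    show "B \<subseteq> (\<lambda>T. \<Prod>p\<in>T. p) ` SF y z"
    proof
      fix q assume q: "q \<in> B"
      hence q0: "0 < q" and sq: "squarefree q" and c: "coprime q (primorial y)" and qz: "real q \<le> z"
        by (auto simp: B_def A_def)
      have "real (\<Prod>p\<in>prime_factors q. p) \<le> z" using prod_pf_sqf[OF sq] qz by metis
      hence "prime_factors q \<in> SF y z" unfolding SF_def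
        using coprime_primorial[OF q0] c by auto
      thus "q \<in> (\<lambda>T. \<Prod>p\<in>T. p) ` SF y z" using prod_pf_sqf[OF sq] by (metis image_eqI)
    qed
  next
    show "(\<lambda>T. \<Prod>p\<in>T. p) ` SF y z \<subseteq> B"
    proof
      fix q assume "q \<in> (\<lambda>T. \<Prod>p\<in>T. p) ` SF y z"
      then obtain T where T: "T \<in> SF y z" and q: "q = (\<Prod>p\<in>T. p)" by auto
      have fT: "finite T" and pT: "\<forall>p\<in>T. prime p" and yT: "\<forall>p\<in>T. y < real p"
        and zT: "(\<Prod>p\<in>T. real p) \<le> z" using T by (auto simp: SF_def)
      have q0: "0 < q" using q prod_pos_primes pT by auto
      show "q \<in> B" unfolding B_def A_def
        using q0 zT q coprime_primorial[OF q0, of y] pf_prod[OF fT pT] yT sqf_prod[OF fT pT]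
        by auto
    qed
  qed
  also have "(\<Sum>q\<in>(\<lambda>T. \<Prod>p\<in>T. p) ` SF y z. f q) = (\<Sum>T\<in>SF y z. f (\<Prod>p\<in>T. p))"
  proof (rule sum.reindex_cong[where l="\<lambda>T. \<Prod>p\<in>T. p"])
    show "inj_on (\<lambda>T. \<Prod>p\<in>T. p) (SF y z)"
    proof (rule inj_onI)
      fix S T assume "S \<in> SF y z" "T \<in> SF y z" "(\<Prod>p\<in>S. p) = (\<Prod>p\<in>T. p)"
      thus "S = T" using pf_prod unfolding SF_def by (metis (no_types, lifting) mem_Collect_eq)
    qed
  qed auto
  finally show ?thesis unfolding A_def .
qed


definition Gs :: "nat set \<Rightarrow> real \<Rightarrow> real" where
  "Gs P x = (\<Sum>T\<in>{T. T \<subseteq> P \<and> (\<Prod>p\<in>T. real p) \<le> x}. \<Prod>p\<in>T. 1 / (real p - 1))"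

definition Hs :: "nat set \<Rightarrow> real \<Rightarrow> real" where
  "Hs P x = (\<Sum>n\<in>{n::nat. 0 < n \<and> real n \<le> x \<and> prime_factors n \<subseteq> P}. 1 / real n)"

lemma prime_ge2_real: "prime (p::nat) \<Longrightarrow> 2 \<le> real p"
  using prime_ge_2_nat by (metis of_nat_le_iff of_nat_numeral)

lemma Gs_term_nonneg: "\<forall>p\<in>P. prime (p::nat) \<Longrightarrow> T \<subseteq> P \<Longrightarrow> 0 \<le> (\<Prod>p\<in>T. 1 / (real p - 1))"
proof (intro prod_nonneg)
  fix p assume "\<forall>p\<in>P. prime (p::nat)" "T \<subseteq> P" "p \<in> T"
  hence "2 \<le> real p" using prime_ge2_real by blast
  thus "0 \<le> 1 / (real p - 1)" by simp
qed

lemma Gs_nonneg: "\<forall>p\<in>P. prime (p::nat) \<Longrightarrow> 0 \<le> Gs P x"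
  using Gs_term_nonneg[of P] unfolding Gs_def by (intro sum_nonneg) auto

lemma Gs_mono:
  assumes "finite P" "\<forall>p\<in>P. prime (p::nat)" "x \<le> x'"
  shows "Gs P x \<le> Gs P x'"
  unfolding Gs_def
proof (rule sum_mono2)
  show "finite {T. T \<subseteq> P \<and> (\<Prod>p\<in>T. real p) \<le> x'}"
    by (rule finite_subset[of _ "Pow P"]) (use assms(1) in auto)
  show "{T. T \<subseteq> P \<and> (\<Prod>p\<in>T. real p) \<le> x} \<subseteq> {T. T \<subseteq> P \<and> (\<Prod>p\<in>T. real p) \<le> x'}"
    using assms(3) by auto
  show "0 \<le> (\<Prod>p\<in>b. 1 / (real p - 1))"
    if "b \<in> {T. T \<subseteq> P \<and> (\<Prod>p\<in>T. real p) \<le> x'} - {T. T \<subseteq> P \<and> (\<Prod>p\<in>T. real p) \<le> x}" for b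
    using that Gs_term_nonneg[OF assms(2)] by blast
qed

lemma Gs_empty_set: "x < 1 \<Longrightarrow> \<forall>p\<in>P. prime (p::nat) \<Longrightarrow> Gs P x = 0"
proof -
  assume x: "x < 1" and pr: "\<forall>p\<in>P. prime (p::nat)"
  have E: "{T. T \<subseteq> P \<and> (\<Prod>p\<in>T. real p) \<le> x} = {}"
  proof -
    { fix T assume "T \<subseteq> P"
      hence "0 < (\<Prod>p\<in>T. p)" using pr prod_pos_primes[of T] by auto
      hence "1 \<le> (\<Prod>p\<in>T. p)" by linarith
      hence "real 1 \<le> real (\<Prod>p\<in>T. p)" by (simp only: of_nat_le_iff)
      hence "1 \<le> (\<Prod>p\<in>T. real p)" by simp
      hence "\<not> (\<Prod>p\<in>T. real p) \<le> x" using x by linarith }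
    thus ?thesis by blast
  qed
  show ?thesis unfolding Gs_def by (simp only: E sum.empty)
qed

lemma Gs_div_le:
  assumes "finite P" "\<forall>p\<in>P. prime (p::nat)" "1 \<le> d"
  shows "Gs P (x / d) \<le> Gs P x"
proof (cases "x \<ge> 0")
  case True
  hence "x / d \<le> x" using assms(3) mult_right_mono[of 1 d x] by (simp add: divide_le_eq mult.commute)
  thus ?thesis using Gs_mono assms by blast
next
  case False
  hence "x / d \<le> 0" using assms(3) by (simp add: divide_nonpos_pos)
  hence "x / d < 1" by linarith
  thus ?thesis using Gs_empty_set[of "x/d" P] Gs_nonneg[of P x] assms by auto
qed

lemma Gs_rec:
  assumes fP: "finite P" and pr: "\<forall>q\<in>P. prime (q::nat)" and p: "prime p" and pP: "p \<notin> P"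
  shows "Gs (insert p P) x = Gs P x + Gs P (x / real p) / (real p - 1)"
proof -
  define f where "f = (\<lambda>T::nat set. \<Prod>q\<in>T. 1 / (real q - 1))"
  define I where "I = {T. T \<subseteq> insert p P \<and> (\<Prod>q\<in>T. real q) \<le> x}"
  have finI: "finite I" unfolding I_def
    by (rule finite_subset[of _ "Pow (insert p P)"]) (use fP in auto)
  have p2: "2 \<le> real p" using prime_ge2_real[OF p] .
  have "Gs (insert p P) x = sum f (I \<inter> {T. p \<notin> T}) + sum f (I - {T. p \<notin> T})"
    unfolding Gs_def f_def I_def[symmetric] by (rule sum.Int_Diff[OF finI])
  also have "I \<inter> {T. p \<notin> T} = {T. T \<subseteq> P \<and> (\<Prod>q\<in>T. real q) \<le> x}"
    unfolding I_def using pP by auto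
  also have "I - {T. p \<notin> T} = insert p ` {T. T \<subseteq> P \<and> (\<Prod>q\<in>T. real q) \<le> x / real p}"
  proof
    show "I - {T. p \<notin> T} \<subseteq> insert p ` {T. T \<subseteq> P \<and> (\<Prod>q\<in>T. real q) \<le> x / real p}"
    proof
      fix T assume T: "T \<in> I - {T. p \<notin> T}"
      hence pT: "p \<in> T" and TP: "T \<subseteq> insert p P" and Tx: "(\<Prod>q\<in>T. real q) \<le> x"
        by (auto simp: I_def)
      have fT: "finite T" using TP fP finite_subset by blast
      have "(\<Prod>q\<in>T. real q) = real p * (\<Prod>q\<in>T - {p}. real q)"
        using pT fT by (simp add: prod.remove)
      hence "real p * (\<Prod>q\<in>T - {p}. real q) \<le> x" using Tx by simp
      hence "(\<Prod>q\<in>T - {p}. real q) \<le> x / real p" using p2 by (simp add: field_simps)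
      moreover have "T - {p} \<subseteq> P" using TP by auto
      moreover have "T = insert p (T - {p})" using pT by auto
      ultimately show "T \<in> insert p ` {T. T \<subseteq> P \<and> (\<Prod>q\<in>T. real q) \<le> x / real p}" by blast
    qed
  next
    show "insert p ` {T. T \<subseteq> P \<and> (\<Prod>q\<in>T. real q) \<le> x / real p} \<subseteq> I - {T. p \<notin> T}"
    proof
      fix T' assume "T' \<in> insert p ` {T. T \<subseteq> P \<and> (\<Prod>q\<in>T. real q) \<le> x / real p}"
      then obtain T where T: "T \<subseteq> P" "(\<Prod>q\<in>T. real q) \<le> x / real p" and T': "T' = insert p T" by auto
      have fT: "finite T" using T fP finite_subset by blast
      have "p \<notin> T" using T pP by auto
      hence "(\<Prod>q\<in>T'. real q) = real p * (\<Prod>q\<in>T. real q)" using T' fT by simp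
      also have "\<dots> \<le> x" using T(2) p2 by (simp add: field_simps)
      finally show "T' \<in> I - {T. p \<notin> T}" unfolding I_def using T T' by auto
    qed
  qed
  also have "sum f (insert p ` {T. T \<subseteq> P \<and> (\<Prod>q\<in>T. real q) \<le> x / real p})
      = (\<Sum>T\<in>{T. T \<subseteq> P \<and> (\<Prod>q\<in>T. real q) \<le> x / real p}. f (insert p T))"
  proof (rule sum.reindex[unfolded comp_def])
    show "inj_on (insert p) {T. T \<subseteq> P \<and> (\<Prod>q\<in>T. real q) \<le> x / real p}"
      using pP by (intro inj_onI) (metis (no_types, lifting) insert_ident mem_Collect_eq subsetD)
  qed
  also have "\<dots> = (\<Sum>T\<in>{T. T \<subseteq> P \<and> (\<Prod>q\<in>T. real q) \<le> x / real p}. f T / (real p - 1))"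
  proof (rule sum.cong[OF refl])
    fix T assume T: "T \<in> {T. T \<subseteq> P \<and> (\<Prod>q\<in>T. real q) \<le> x / real p}"
    hence "finite T" "p \<notin> T" using fP pP finite_subset by auto
    thus "f (insert p T) = f T / (real p - 1)" unfolding f_def by simp
  qed
  also have "\<dots> = Gs P (x / real p) / (real p - 1)"
    unfolding Gs_def f_def by (simp add: sum_divide_distrib)
  finally show ?thesis unfolding Gs_def f_def by simp
qed


lemma Gs_D:
  assumes "finite D" "finite P" "\<forall>p\<in>P. prime (p::nat)" "\<forall>p\<in>D. prime p" "D \<inter> P = {}"
  shows "Gs (P \<union> D) x \<le> (\<Prod>p\<in>D. real p / (real p - 1)) * Gs P x"
  using assms(1,4,5)
proof (induction D arbitrary: x rule: finite_induct)
  case empty thus ?case by simp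
next
  case (insert d D)
  have d: "prime d" and dP: "d \<notin> P \<union> D" using insert by auto
  have fPD: "finite (P \<union> D)" and prPD: "\<forall>p\<in>P \<union> D. prime p" using insert assms by auto
  have d2: "2 \<le> real d" using prime_ge2_real[OF d] .
  have IH: "Gs (P \<union> D) x \<le> (\<Prod>p\<in>D. real p / (real p - 1)) * Gs P x"
    using insert by auto
  have "Gs (P \<union> insert d D) x = Gs (insert d (P \<union> D)) x" by simp
  also have "\<dots> = Gs (P \<union> D) x + Gs (P \<union> D) (x / real d) / (real d - 1)"
    by (rule Gs_rec[OF fPD prPD d dP])
  also have "\<dots> \<le> Gs (P \<union> D) x + Gs (P \<union> D) x / (real d - 1)"
    using Gs_div_le[OF fPD prPD, of "real d" x] d2 by (simp add: divide_right_mono)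
  also have "\<dots> = real d / (real d - 1) * Gs (P \<union> D) x"
    using d2 by (simp add: field_simps)
  also have "\<dots> \<le> real d / (real d - 1) * ((\<Prod>p\<in>D. real p / (real p - 1)) * Gs P x)"
    using IH d2 by (intro mult_left_mono) auto
  also have "\<dots> = (\<Prod>p\<in>insert d D. real p / (real p - 1)) * Gs P x"
    using insert by simp
  finally show ?case .
qed

lemma Hs_fin: "finite {n::nat. 0 < n \<and> real n \<le> x \<and> prime_factors n \<subseteq> P}"
  by (rule finite_subset[of _ "{..nat \<lfloor>x\<rfloor>}"]) (auto intro: nat_le_floor)

lemma Hs_small: "x < 1 \<Longrightarrow> Hs P x = 0"
proof -
  assume x: "x < 1"
  have E: "{n::nat. 0 < n \<and> real n \<le> x \<and> prime_factors n \<subseteq> P} = {}"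
    using x by auto
  show ?thesis unfolding Hs_def by (simp only: E sum.empty)
qed

lemma Hs_rec:
  assumes p: "prime p" and pP: "p \<notin> P"
  shows "Hs (insert p P) x = Hs P x + Hs (insert p P) (x / real p) / real p"
proof -
  define f where "f = (\<lambda>n::nat. 1 / real n)"
  define I where "I = {n::nat. 0 < n \<and> real n \<le> x \<and> prime_factors n \<subseteq> insert p P}"
  have p2: "2 \<le> real p" using prime_ge2_real[OF p] .
  have p0: "p \<noteq> 0" using p by auto
  have "Hs (insert p P) x = sum f (I \<inter> {n. \<not> p dvd n}) + sum f (I - {n. \<not> p dvd n})"
    unfolding Hs_def f_def I_def[symmetric] by (rule sum.Int_Diff[OF Hs_fin[of x "insert p P", folded I_def]])
  also have "I \<inter> {n. \<not> p dvd n} = {n::nat. 0 < n \<and> real n \<le> x \<and> prime_factors n \<subseteq> P}"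
  proof
    show "I \<inter> {n. \<not> p dvd n} \<subseteq> {n::nat. 0 < n \<and> real n \<le> x \<and> prime_factors n \<subseteq> P}"
    proof
      fix n assume n: "n \<in> I \<inter> {n. \<not> p dvd n}"
      have "prime_factors n \<subseteq> P"
      proof
        fix q assume q: "q \<in> prime_factors n"
        hence "q dvd n" by auto
        hence "q \<noteq> p" using n by auto
        thus "q \<in> P" using q n unfolding I_def by auto
      qed
      thus "n \<in> {n::nat. 0 < n \<and> real n \<le> x \<and> prime_factors n \<subseteq> P}" using n unfolding I_def by auto
    qed
  next
    show "{n::nat. 0 < n \<and> real n \<le> x \<and> prime_factors n \<subseteq> P} \<subseteq> I \<inter> {n. \<not> p dvd n}"
    proof
      fix n assume n: "n \<in> {n::nat. 0 < n \<and> real n \<le> x \<and> prime_factors n \<subseteq> P}"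
      have "\<not> p dvd n"
      proof
        assume "p dvd n"
        hence "p \<in> prime_factors n" using n p by (auto simp: in_prime_factors_iff)
        thus False using n pP by auto
      qed
      thus "n \<in> I \<inter> {n. \<not> p dvd n}" using n unfolding I_def by auto
    qed
  qed
  also have "I - {n. \<not> p dvd n} = (\<lambda>m. p * m) ` {m::nat. 0 < m \<and> real m \<le> x / real p \<and> prime_factors m \<subseteq> insert p P}"
  proof
    show "I - {n. \<not> p dvd n} \<subseteq> (\<lambda>m. p * m) ` {m::nat. 0 < m \<and> real m \<le> x / real p \<and> prime_factors m \<subseteq> insert p P}"
    proof
      fix n assume n: "n \<in> I - {n. \<not> p dvd n}"
      then obtain m where m: "n = p * m" by auto
      have n0: "0 < n" and nx: "real n \<le> x" and pf: "prime_factors n \<subseteq> insert p P" using n unfolding I_def by auto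
      have m0: "0 < m" using n0 m by auto
      have "real p * real m \<le> x" using nx m by simp
      hence "real m \<le> x / real p" using p2 by (simp add: field_simps)
      moreover have "prime_factors m \<subseteq> insert p P"
        using pf m m0 p0 prime_factors_product[of p m] by auto
      ultimately show "n \<in> (\<lambda>m. p * m) ` {m::nat. 0 < m \<and> real m \<le> x / real p \<and> prime_factors m \<subseteq> insert p P}"
        using m m0 by auto
    qed
  next
    show "(\<lambda>m. p * m) ` {m::nat. 0 < m \<and> real m \<le> x / real p \<and> prime_factors m \<subseteq> insert p P} \<subseteq> I - {n. \<not> p dvd n}"
    proof
      fix n assume "n \<in> (\<lambda>m. p * m) ` {m::nat. 0 < m \<and> real m \<le> x / real p \<and> prime_factors m \<subseteq> insert p P}"
      then obtain m where m: "n = p * m" and m0: "0 < m" and mx: "real m \<le> x / real p"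
        and pf: "prime_factors m \<subseteq> insert p P" by auto
      have "real n = real p * real m" using m by simp
      also have "\<dots> \<le> x" using mx p2 by (simp add: field_simps)
      finally have nx: "real n \<le> x" .
      have "prime_factors n = prime_factors p \<union> prime_factors m"
        using m m0 p0 prime_factors_product[of p m] by auto
      hence "prime_factors n \<subseteq> insert p P" using pf p by (auto simp: prime_prime_factors)
      thus "n \<in> I - {n. \<not> p dvd n}" unfolding I_def using nx m m0 p0 by auto
    qed
  qed
  also have "sum f ((\<lambda>m. p * m) ` {m::nat. 0 < m \<and> real m \<le> x / real p \<and> prime_factors m \<subseteq> insert p P})
     = (\<Sum>m\<in>{m::nat. 0 < m \<and> real m \<le> x / real p \<and> prime_factors m \<subseteq> insert p P}. f (p * m))"
    by (rule sum.reindex[unfolded comp_def]) (use p0 in \<open>auto intro: inj_onI\<close>)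
  also have "\<dots> = (\<Sum>m\<in>{m::nat. 0 < m \<and> real m \<le> x / real p \<and> prime_factors m \<subseteq> insert p P}. f m / real p)"
    unfolding f_def by (rule sum.cong) auto
  finally show ?thesis unfolding Hs_def f_def by (simp add: sum_divide_distrib)
qed

lemma floor_div_less:
  assumes "1 \<le> x" "2 \<le> (d::real)"
  shows "nat \<lfloor>x / d\<rfloor> < nat \<lfloor>x\<rfloor>"
proof -
  have a: "of_int \<lfloor>x / d\<rfloor> \<le> x / d" by (rule of_int_floor_le)
  have b: "x / d \<le> x / 2" using assms by (intro divide_left_mono) auto
  have c: "x - 1 < of_int \<lfloor>x\<rfloor>" by linarith
  have e: "1 \<le> \<lfloor>x\<rfloor>" using assms by linarith
  have "\<lfloor>x / d\<rfloor> < \<lfloor>x\<rfloor>"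
  proof (rule ccontr)
    assume "\<not> \<lfloor>x / d\<rfloor> < \<lfloor>x\<rfloor>"
    hence "of_int \<lfloor>x\<rfloor> \<le> x / 2" using a b by linarith
    hence "x < 2" using c by linarith
    hence "of_int \<lfloor>x\<rfloor> < (1::real)" using \<open>of_int \<lfloor>x\<rfloor> \<le> x / 2\<close> by linarith
    thus False using e by linarith
  qed
  thus ?thesis using e by linarith
qed

lemma H_le_G:
  assumes "finite P" "\<forall>p\<in>P. prime (p::nat)"
  shows "Hs P x \<le> Gs P x"
  using assms
proof (induction P arbitrary: x rule: finite_induct)
  case empty
  have E1: "{n::nat. 0 < n \<and> real n \<le> x \<and> prime_factors n \<subseteq> {}} = (if 1 \<le> x then {1} else {})"
  proof -
    { fix n :: nat assume "0 < n" "prime_factors n \<subseteq> {}"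
      hence "n = 1" using prime_factorization_empty_iff[of n] by auto }
    thus ?thesis by auto
  qed
  have E2: "{T. T \<subseteq> {} \<and> (\<Prod>p\<in>T. real p) \<le> x} = (if 1 \<le> x then {{}} else {})" by auto
  show ?case unfolding Hs_def Gs_def E1 E2 by simp
next
  case (insert p P)
  have p: "prime p" and pr: "\<forall>q\<in>P. prime q" and IH: "\<And>x. Hs P x \<le> Gs P x" using insert by auto
  have p2: "2 \<le> real p" using prime_ge2_real[OF p] .
  have prI: "\<forall>q\<in>insert p P. prime q" using insert by auto
  have main: "\<forall>x. nat \<lfloor>x\<rfloor> \<le> N \<longrightarrow> Hs (insert p P) x \<le> Gs (insert p P) x" for N
  proof (induction N)
    case 0
    show ?case
    proof (intro allI impI)
      fix x :: real assume "nat \<lfloor>x\<rfloor> \<le> 0"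
      hence "x < 1" by linarith
      thus "Hs (insert p P) x \<le> Gs (insert p P) x" using Hs_small Gs_nonneg[OF prI] by simp
    qed
  next
    case (Suc N)
    show ?case
    proof (intro allI impI)
      fix x :: real assume xN: "nat \<lfloor>x\<rfloor> \<le> Suc N"
      show "Hs (insert p P) x \<le> Gs (insert p P) x"
      proof (cases "x < 1")
        case True thus ?thesis using Hs_small Gs_nonneg[OF prI] by simp
      next
        case False
        hence "nat \<lfloor>x / real p\<rfloor> < nat \<lfloor>x\<rfloor>" using floor_div_less p2 by simp
        hence "nat \<lfloor>x / real p\<rfloor> \<le> N" using xN by linarith
        hence IH2: "Hs (insert p P) (x / real p) \<le> Gs (insert p P) (x / real p)"
          using Suc.IH by blast
        have "Hs (insert p P) x = Hs P x + Hs (insert p P) (x / real p) / real p"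
          by (rule Hs_rec[OF p insert(2)])
        also have "\<dots> \<le> Gs P x + Gs (insert p P) (x / real p) / real p"
          using IH[of x] IH2 p2 by (simp add: divide_right_mono add_mono)
        also have "Gs (insert p P) (x / real p) = Gs P (x / real p) + Gs P (x / real p / real p) / (real p - 1)"
          by (rule Gs_rec[OF insert(1) pr p insert(2)])
        also have "\<dots> \<le> Gs P (x / real p) + Gs P (x / real p) / (real p - 1)"
          using Gs_div_le[OF insert(1) pr, of "real p" "x / real p"] p2 by (simp add: divide_right_mono)
        also have "Gs P x + (Gs P (x / real p) + Gs P (x / real p) / (real p - 1)) / real p
            = Gs P x + Gs P (x / real p) / (real p - 1)"
          using p2 by (simp add: field_simps)
        also have "\<dots> = Gs (insert p P) x"
          by (rule Gs_rec[OF insert(1) pr p insert(2), symmetric])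
        finally show ?thesis using p2 by (simp add: divide_right_mono)
      qed
    qed
  qed
  show ?case using main[of "nat \<lfloor>x\<rfloor>"] by simp
qed


lemma Hs_ln:
  assumes x: "1 \<le> x" and cov: "{p. prime p \<and> real p \<le> x} \<subseteq> P"
  shows "ln x \<le> Hs P x"
proof -
  define m where "m = nat \<lfloor>x\<rfloor>"
  have rm: "real m = of_int \<lfloor>x\<rfloor>" unfolding m_def using x by simp
  have E: "{n::nat. 0 < n \<and> real n \<le> x \<and> prime_factors n \<subseteq> P} = {1..m}"
  proof
    show "{n::nat. 0 < n \<and> real n \<le> x \<and> prime_factors n \<subseteq> P} \<subseteq> {1..m}"
      unfolding m_def by (auto intro: nat_le_floor)
  next
    show "{1..m} \<subseteq> {n::nat. 0 < n \<and> real n \<le> x \<and> prime_factors n \<subseteq> P}"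
    proof
      fix n assume n: "n \<in> {1..m}"
      have "real n \<le> real m" using n by simp
      also have "\<dots> \<le> x" using rm by linarith
      finally have nx: "real n \<le> x" .
      have "prime_factors n \<subseteq> P"
      proof
        fix q assume q: "q \<in> prime_factors n"
        hence "q \<le> n" using n by (intro dvd_imp_le) auto
        hence "real q \<le> x" using nx by linarith
        thus "q \<in> P" using cov q by auto
      qed
      thus "n \<in> {n::nat. 0 < n \<and> real n \<le> x \<and> prime_factors n \<subseteq> P}" using n nx by auto
    qed
  qed
  have "Hs P x = harm m" unfolding Hs_def E harm_def by (simp add: inverse_eq_divide)
  moreover have "ln (real m + 1) \<le> harm m" by (rule harm_ge_ln)
  moreover have "ln x \<le> ln (real m + 1)" using x rm by (subst ln_le_cancel_iff) linarith+
  ultimately show ?thesis by linarith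
qed

lemma L1:
  assumes y: "1 \<le> y" and fP: "finite P" and fD: "finite D" and pr: "\<forall>p\<in>P \<union> D. prime (p::nat)"
    and cov: "{p. prime p \<and> real p \<le> y} \<subseteq> P \<union> D"
  shows "(\<Prod>p\<in>D. 1 - 1 / real p) * ln y \<le> Gs (P - D) y"
proof -
  have prD: "\<forall>p\<in>D. prime p" and prP: "\<forall>p\<in>P - D. prime p" using pr by auto
  have "ln y \<le> Hs (P \<union> D) y" by (rule Hs_ln[OF y cov])
  also have "\<dots> \<le> Gs (P \<union> D) y" using H_le_G fP fD pr by auto
  also have "P \<union> D = (P - D) \<union> D" by auto
  also have "Gs ((P - D) \<union> D) y \<le> (\<Prod>p\<in>D. real p / (real p - 1)) * Gs (P - D) y"
    by (rule Gs_D) (use fD fP prD prP in auto)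
  finally have h: "ln y \<le> (\<Prod>p\<in>D. real p / (real p - 1)) * Gs (P - D) y" .
  have e0: "0 \<le> (\<Prod>p\<in>D. 1 - 1 / real p)"
  proof (rule prod_nonneg)
    fix p assume "p \<in> D" hence "2 \<le> real p" using prD prime_ge2_real by blast
    thus "0 \<le> 1 - 1 / real p" by simp
  qed
  have e1: "(\<Prod>p\<in>D. 1 - 1 / real p) * (\<Prod>p\<in>D. real p / (real p - 1)) = 1"
  proof -
    have "(\<Prod>p\<in>D. 1 - 1 / real p) * (\<Prod>p\<in>D. real p / (real p - 1))
        = (\<Prod>p\<in>D. (1 - 1 / real p) * (real p / (real p - 1)))" by (rule prod.distrib[symmetric])
    also have "\<dots> = (\<Prod>p\<in>D. 1)"
    proof (rule prod.cong[OF refl])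
      fix p assume "p \<in> D" hence "2 \<le> real p" using prD prime_ge2_real by blast
      thus "(1 - 1 / real p) * (real p / (real p - 1)) = 1" by (simp add: field_simps)
    qed
    finally show ?thesis by simp
  qed
  have "(\<Prod>p\<in>D. 1 - 1 / real p) * ln y \<le> (\<Prod>p\<in>D. 1 - 1 / real p) * ((\<Prod>p\<in>D. real p / (real p - 1)) * Gs (P - D) y)"
    using h e0 by (rule mult_left_mono)
  also have "\<dots> = Gs (P - D) y" using e1 by (simp add: mult.assoc[symmetric])
  finally show ?thesis .
qed


lemma prod_real_ge1: "\<forall>p\<in>T. prime (p::nat) \<Longrightarrow> 1 \<le> (\<Prod>p\<in>T. real p)"
proof (rule prod_ge_1)
  fix x assume "\<forall>p\<in>T. prime (p::nat)" "x \<in> T"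
  hence "2 \<le> real x" using prime_ge2_real by blast
  thus "1 \<le> real x" by linarith
qed

lemma SF_memD:
  assumes "S \<in> SF y z"
  shows "finite S" "\<forall>p\<in>S. prime p" "\<forall>p\<in>S. y < real p" "(\<Prod>p\<in>S. real p) \<le> z"
  using assms unfolding SF_def by auto

lemma SF_le: "S \<in> SF y z \<Longrightarrow> p \<in> S \<Longrightarrow> real p \<le> z"
proof -
  assume S: "S \<in> SF y z" and p: "p \<in> S"
  have "p \<le> (\<Prod>p\<in>S. p)" using mem_le_prod SF_memD[OF S] p by blast
  hence "real p \<le> real (\<Prod>p\<in>S. p)" by (simp only: of_nat_le_iff)
  also have "\<dots> = (\<Prod>p\<in>S. real p)" by simp
  finally show ?thesis using SF_memD(4)[OF S] by linarith
qed

lemma d2_reindex: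
  fixes a' b :: "nat \<Rightarrow> real" and z :: real and k :: nat
  defines "Pz \<equiv> {p. prime p \<and> real p \<le> z}" and "D0 \<equiv> {p. prime p \<and> p \<le> k + 1}"
  shows "(\<Sum>S\<in>SF (real (k+1)) z. \<Prod>p\<in>S. a' p + b p)
    = (\<Sum>C\<in>SF (real (k+1)) z. (\<Prod>p\<in>C. a' p) *
        (\<Sum>B\<in>{B. B \<subseteq> Pz - (D0 \<union> C) \<and> (\<Prod>p\<in>B. real p) \<le> z / (\<Prod>p\<in>C. real p)}. \<Prod>p\<in>B. b p))"
proof -
  define BS where "BS = (\<lambda>C. {B. B \<subseteq> Pz - (D0 \<union> C) \<and> (\<Prod>p\<in>B. real p) \<le> z / (\<Prod>p\<in>C. real p)})"
  have finPz: "finite Pz" unfolding Pz_def using fin_primes_le by simp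
  have finBS: "finite (BS C)" for C unfolding BS_def
    by (rule finite_subset[of _ "Pow Pz"]) (use finPz in auto)
  have "(\<Sum>S\<in>SF (real (k+1)) z. \<Prod>p\<in>S. a' p + b p)
      = (\<Sum>S\<in>SF (real (k+1)) z. \<Sum>C\<in>Pow S. (\<Prod>p\<in>C. a' p) * (\<Prod>p\<in>S - C. b p))"
    by (rule sum.cong[OF refl], rule prod_add) (auto dest: SF_memD)
  also have "\<dots> = (\<Sum>(S, C)\<in>Sigma (SF (real (k+1)) z) Pow. (\<Prod>p\<in>C. a' p) * (\<Prod>p\<in>S - C. b p))"
    by (rule sum.Sigma) (auto simp: SF_fin dest: SF_memD)
  also have "\<dots> = (\<Sum>(C, B)\<in>Sigma (SF (real (k+1)) z) BS. (\<Prod>p\<in>C. a' p) * (\<Prod>p\<in>B. b p))"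
  proof (rule sum.reindex_bij_witness[where j = "\<lambda>(S, C). (C, S - C)" and i = "\<lambda>(C, B). (C \<union> B, C)"])
    fix a assume a: "a \<in> Sigma (SF (real (k+1)) z) Pow"
    then obtain S C where aSC: "a = (S, C)" and S: "S \<in> SF (real (k+1)) z" and CS: "C \<subseteq> S" by auto
    show "(case (case a of (S, C) \<Rightarrow> (C, S - C)) of (C, B) \<Rightarrow> (C \<union> B, C)) = a"
      using aSC CS by auto
    show "(case (case a of (S, C) \<Rightarrow> (C, S - C)) of (C, B) \<Rightarrow> (\<Prod>p\<in>C. a' p) * (\<Prod>p\<in>B. b p))
        = (case a of (S, C) \<Rightarrow> (\<Prod>p\<in>C. a' p) * (\<Prod>p\<in>S - C. b p))" using aSC by simp
    have fS: "finite S" and prS: "\<forall>p\<in>S. prime p" and gS: "\<forall>p\<in>S. real (k+1) < real p"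
      and zS: "(\<Prod>p\<in>S. real p) \<le> z" using SF_memD[OF S] by auto
    have fC: "finite C" using fS CS finite_subset by blast
    have split: "(\<Prod>p\<in>S. real p) = (\<Prod>p\<in>C. real p) * (\<Prod>p\<in>S - C. real p)"
    proof -
      have "S = C \<union> (S - C)" using CS by auto
      hence "(\<Prod>p\<in>S. real p) = (\<Prod>p\<in>C \<union> (S - C). real p)" by simp
      also have "\<dots> = (\<Prod>p\<in>C. real p) * (\<Prod>p\<in>S - C. real p)"
        by (rule prod.union_disjoint) (use fS fC in auto)
      finally show ?thesis .
    qed
    have c1: "1 \<le> (\<Prod>p\<in>C. real p)" using prS CS by (intro prod_real_ge1) auto
    have d1: "1 \<le> (\<Prod>p\<in>S - C. real p)" using prS by (intro prod_real_ge1) auto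
    have "(\<Prod>p\<in>C. real p) * 1 \<le> (\<Prod>p\<in>C. real p) * (\<Prod>p\<in>S - C. real p)"
      using c1 d1 by (intro mult_left_mono) auto
    hence "(\<Prod>p\<in>C. real p) \<le> (\<Prod>p\<in>S. real p)" using split by simp
    hence Cz: "(\<Prod>p\<in>C. real p) \<le> z" using zS by linarith
    have C: "C \<in> SF (real (k+1)) z" unfolding SF_def using fC prS gS CS Cz by auto
    have "(\<Prod>p\<in>S - C. real p) \<le> z / (\<Prod>p\<in>C. real p)"
      using split zS c1 by (simp add: field_simps)
    moreover have "S - C \<subseteq> Pz - (D0 \<union> C)"
    proof
      fix p assume p: "p \<in> S - C"
      hence "real p \<le> z" using SF_le[OF S] by auto
      moreover have "\<not> p \<le> k + 1" using gS p by auto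
      ultimately show "p \<in> Pz - (D0 \<union> C)" using p prS unfolding Pz_def D0_def by auto
    qed
    ultimately show "(case a of (S, C) \<Rightarrow> (C, S - C)) \<in> Sigma (SF (real (k+1)) z) BS"
      using aSC C unfolding BS_def by auto
  next
    fix b assume b: "b \<in> Sigma (SF (real (k+1)) z) BS"
    then obtain C B where bCB: "b = (C, B)" and C: "C \<in> SF (real (k+1)) z" and B: "B \<in> BS C" by auto
    have BP: "B \<subseteq> Pz - (D0 \<union> C)" and Bz: "(\<Prod>p\<in>B. real p) \<le> z / (\<Prod>p\<in>C. real p)"
      using B unfolding BS_def by auto
    have fC: "finite C" and prC: "\<forall>p\<in>C. prime p" and gC: "\<forall>p\<in>C. real (k+1) < real p"
      and zC: "(\<Prod>p\<in>C. real p) \<le> z" using SF_memD[OF C] by auto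
    have fB: "finite B" using BP finPz finite_subset by blast
    have disj: "C \<inter> B = {}" using BP by auto
    show "(case (case b of (C, B) \<Rightarrow> (C \<union> B, C)) of (S, C) \<Rightarrow> (C, S - C)) = b"
      using bCB disj by auto
    have c1: "1 \<le> (\<Prod>p\<in>C. real p)" using prC by (intro prod_real_ge1) auto
    have "(\<Prod>p\<in>C \<union> B. real p) = (\<Prod>p\<in>C. real p) * (\<Prod>p\<in>B. real p)"
      by (rule prod.union_disjoint[OF fC fB disj])
    also have "\<dots> \<le> z" using Bz c1 by (simp add: field_simps)
    finally have z: "(\<Prod>p\<in>C \<union> B. real p) \<le> z" .
    have "\<forall>p\<in>B. prime p \<and> real (k+1) < real p" using BP unfolding Pz_def D0_def by auto
    hence "C \<union> B \<in> SF (real (k+1)) z" unfolding SF_def using fC fB prC gC z by auto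
    thus "(case b of (C, B) \<Rightarrow> (C \<union> B, C)) \<in> Sigma (SF (real (k+1)) z) Pow" using bCB by auto
  qed
  also have "\<dots> = (\<Sum>C\<in>SF (real (k+1)) z. \<Sum>B\<in>BS C. (\<Prod>p\<in>C. a' p) * (\<Prod>p\<in>B. b p))"
    by (rule sum.Sigma[symmetric]) (auto simp: SF_fin finBS)
  also have "\<dots> = (\<Sum>C\<in>SF (real (k+1)) z. (\<Prod>p\<in>C. a' p) * (\<Sum>B\<in>BS C. \<Prod>p\<in>B. b p))"
    by (simp add: sum_distrib_left)
  finally show ?thesis unfolding BS_def .
qed


lemma U_identity:
  fixes f h :: "nat \<Rightarrow> real"
  assumes "finite C"
  shows "(\<Prod>p\<in>C. f p + h p + f p * h p) = (\<Sum>(X, Y)\<in>{(X, Y). X \<union> Y = C}. (\<Prod>p\<in>X. f p) * (\<Prod>p\<in>Y. h p))"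
  using assms
proof (induction C rule: finite_induct)
  case empty
  have "{(X, Y). X \<union> Y = ({}::nat set)} = {({}, {})}" by auto
  thus ?case by simp
next
  case (insert x C)
  define PS where "PS = {(X, Y). X \<union> Y = C}"
  define F where "F = (\<lambda>(X, Y). (\<Prod>p\<in>X. f p) * (\<Prod>p\<in>Y. h p))"
  define i1 where "i1 = (\<lambda>(X::nat set, Y::nat set). (insert x X, Y))"
  define i2 where "i2 = (\<lambda>(X::nat set, Y::nat set). (X, insert x Y))"
  define i3 where "i3 = (\<lambda>(X::nat set, Y::nat set). (insert x X, insert x Y))"
  have finPS: "finite PS" unfolding PS_def
    by (rule finite_subset[of _ "Pow C \<times> Pow C"]) (use insert(1) in auto)
  have memPS: "(X, Y) \<in> PS \<Longrightarrow> finite X \<and> finite Y \<and> x \<notin> X \<and> x \<notin> Y" for X Y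
    unfolding PS_def using insert(1,2) finite_subset by auto
  have E: "{(X, Y). X \<union> Y = insert x C} = i1 ` PS \<union> i2 ` PS \<union> i3 ` PS"
  proof
    show "{(X, Y). X \<union> Y = insert x C} \<subseteq> i1 ` PS \<union> i2 ` PS \<union> i3 ` PS"
    proof
      fix q assume "q \<in> {(X, Y). X \<union> Y = insert x C}"
      then obtain X Y where q: "q = (X, Y)" and XY: "X \<union> Y = insert x C" by auto
      have base: "(X - {x}) \<union> (Y - {x}) = C" using XY insert(2) by auto
      show "q \<in> i1 ` PS \<union> i2 ` PS \<union> i3 ` PS"
      proof (cases "x \<in> X")
        case True
        show ?thesis
        proof (cases "x \<in> Y")
          case True
          have "q = i3 (X - {x}, Y - {x})" using q \<open>x \<in> X\<close> True unfolding i3_def by auto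
          moreover have "(X - {x}, Y - {x}) \<in> PS" using base unfolding PS_def by auto
          ultimately show ?thesis by blast
        next
          case False
          have "q = i1 (X - {x}, Y)" using q \<open>x \<in> X\<close> unfolding i1_def by auto
          moreover have "(X - {x}, Y) \<in> PS" using base False unfolding PS_def by auto
          ultimately show ?thesis by blast
        qed
      next
        case False
        hence xY: "x \<in> Y" using XY by auto
        have "q = i2 (X, Y - {x})" using q xY unfolding i2_def by auto
        moreover have "(X, Y - {x}) \<in> PS" using base False unfolding PS_def by auto
        ultimately show ?thesis by blast
      qed
    qed
  next
    show "i1 ` PS \<union> i2 ` PS \<union> i3 ` PS \<subseteq> {(X, Y). X \<union> Y = insert x C}"
      unfolding i1_def i2_def i3_def PS_def by auto
  qed
  have inj1: "inj_on i1 PS" unfolding inj_on_def i1_def using memPS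
    by (auto simp: insert_ident)
  have inj2: "inj_on i2 PS" unfolding inj_on_def i2_def using memPS
    by (auto simp: insert_ident)
  have inj3: "inj_on i3 PS" unfolding inj_on_def i3_def using memPS
    by (auto simp: insert_ident)
  have d12: "i1 ` PS \<inter> i2 ` PS = {}" unfolding i1_def i2_def using memPS by fastforce
  have d3: "(i1 ` PS \<union> i2 ` PS) \<inter> i3 ` PS = {}" unfolding i1_def i2_def i3_def using memPS by fastforce
  have "(\<Sum>q\<in>{(X, Y). X \<union> Y = insert x C}. F q) = sum F (i1 ` PS) + sum F (i2 ` PS) + sum F (i3 ` PS)"
    unfolding E using finPS d12 d3 by (simp add: sum.union_disjoint)
  also have "sum F (i1 ` PS) = (\<Sum>q\<in>PS. f x * F q)"
    by (subst sum.reindex[OF inj1]) (auto intro!: sum.cong simp: F_def i1_def dest: memPS)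
  also have "sum F (i2 ` PS) = (\<Sum>q\<in>PS. h x * F q)"
    by (subst sum.reindex[OF inj2]) (auto intro!: sum.cong simp: F_def i2_def dest: memPS)
  also have "sum F (i3 ` PS) = (\<Sum>q\<in>PS. f x * h x * F q)"
    by (subst sum.reindex[OF inj3]) (auto intro!: sum.cong simp: F_def i3_def dest: memPS)
  also have "(\<Sum>q\<in>PS. f x * F q) + (\<Sum>q\<in>PS. h x * F q) + (\<Sum>q\<in>PS. f x * h x * F q)
      = (f x + h x + f x * h x) * sum F PS"
    by (simp add: sum_distrib_left algebra_simps)
  also have "sum F PS = (\<Prod>p\<in>C. f p + h p + f p * h p)"
    using insert(3) unfolding PS_def F_def by simp
  finally show ?case using insert(1,2) unfolding F_def by simp
qed


lemma prod_union_le: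
  assumes "finite A" "finite L" "\<forall>p\<in>A \<union> L. prime (p::nat)"
  shows "(\<Prod>p\<in>A \<union> L. real p) \<le> (\<Prod>p\<in>A. real p) * (\<Prod>p\<in>L. real p)"
proof -
  have "A \<union> L = A \<union> (L - A)" by auto
  hence "(\<Prod>p\<in>A \<union> L. real p) = (\<Prod>p\<in>A \<union> (L - A). real p)" by simp
  also have "\<dots> = (\<Prod>p\<in>A. real p) * (\<Prod>p\<in>L - A. real p)"
    by (rule prod.union_disjoint) (use assms in auto)
  also have "(\<Prod>p\<in>L - A. real p) \<le> (\<Prod>p\<in>L. real p)"
  proof -
    have "L = (L - A) \<union> (L \<inter> A)" by auto
    hence "(\<Prod>p\<in>L. real p) = (\<Prod>p\<in>(L - A) \<union> (L \<inter> A). real p)" by simp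
    also have "\<dots> = (\<Prod>p\<in>L - A. real p) * (\<Prod>p\<in>L \<inter> A. real p)"
      by (rule prod.union_disjoint) (use assms in auto)
    finally have e: "(\<Prod>p\<in>L. real p) = (\<Prod>p\<in>L - A. real p) * (\<Prod>p\<in>L \<inter> A. real p)" .
    have "1 \<le> (\<Prod>p\<in>L \<inter> A. real p)" using assms by (intro prod_real_ge1) auto
    moreover have "0 \<le> (\<Prod>p\<in>L - A. real p)" by (intro prod_nonneg) auto
    ultimately show ?thesis using e mult_left_mono[of 1 "\<Prod>p\<in>L \<inter> A. real p" "\<Prod>p\<in>L - A. real p"] by simp
  qed
  hence "(\<Prod>p\<in>A. real p) * (\<Prod>p\<in>L - A. real p) \<le> (\<Prod>p\<in>A. real p) * (\<Prod>p\<in>L. real p)"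
    by (intro mult_left_mono) (auto intro: prod_nonneg)
  finally show ?thesis .
qed

lemma real_gt_nat: "1 + real k < real p \<Longrightarrow> Suc k < p"
proof -
  assume "1 + real k < real p"
  hence "real (Suc k) < real p" by simp
  thus ?thesis by (simp only: of_nat_less_iff)
qed

lemma d1:
  fixes w g :: "nat \<Rightarrow> real" and k :: nat and z :: real
  assumes w0: "\<And>p. prime p \<Longrightarrow> k + 1 < p \<Longrightarrow> 0 \<le> w p"
    and g0: "\<And>p. prime p \<Longrightarrow> k + 1 < p \<Longrightarrow> 0 \<le> g p"
  shows "(\<Sum>L\<in>SF (real (k+1)) z. (\<Prod>p\<in>L. w p) *
           (\<Sum>A\<in>SF (real (k+1)) (z / (\<Prod>p\<in>L. real p)). (\<Prod>p\<in>A. g p) * ln (z / (\<Prod>p\<in>L. real p) / (\<Prod>p\<in>A. real p))))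
       \<le> (\<Sum>C\<in>SF (real (k+1)) z. (\<Prod>p\<in>C. w p + g p + w p * g p) * ln (z / (\<Prod>p\<in>C. real p)))"
proof -
  define y where "y = real (k+1)"
  define Q1 where "Q1 = Sigma (SF y z) (\<lambda>L. SF y (z / (\<Prod>p\<in>L. real p)))"
  define Q2 where "Q2 = {(L, A). A \<union> L \<in> SF y z}"
  define F1 where "F1 = (\<lambda>(L, A). (\<Prod>p\<in>L. w p) * ((\<Prod>p\<in>A. g p) * ln (z / (\<Prod>p\<in>L. real p) / (\<Prod>p\<in>A. real p))))"
  define F2 where "F2 = (\<lambda>(L, A). (\<Prod>p\<in>L. w p) * ((\<Prod>p\<in>A. g p) * ln (z / (\<Prod>p\<in>A \<union> L. real p))))"
  have memQ2: "(L, A) \<in> Q2 \<Longrightarrow> finite A \<and> finite L \<and> (\<forall>p\<in>A \<union> L. prime p \<and> k + 1 < p)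
                 \<and> (\<Prod>p\<in>A \<union> L. real p) \<le> z" for L A
    unfolding Q2_def y_def using SF_memD[of "A \<union> L" "real (k+1)" z] by (auto dest: real_gt_nat)
  have nn: "(L, A) \<in> Q2 \<Longrightarrow> 0 \<le> (\<Prod>p\<in>L. w p) \<and> 0 \<le> (\<Prod>p\<in>A. g p)" for L A
    using memQ2[of L A] w0 g0 by (auto intro!: prod_nonneg)
  have Q1Q2: "Q1 \<subseteq> Q2"
  proof
    fix q assume "q \<in> Q1"
    then obtain L A where q: "q = (L, A)" and L: "L \<in> SF y z" and A: "A \<in> SF y (z / (\<Prod>p\<in>L. real p))"
      unfolding Q1_def by auto
    note Lm = SF_memD[OF L] and Am = SF_memD[OF A]
    have l1: "1 \<le> (\<Prod>p\<in>L. real p)" using Lm by (intro prod_real_ge1) auto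
    have "(\<Prod>p\<in>A \<union> L. real p) \<le> (\<Prod>p\<in>A. real p) * (\<Prod>p\<in>L. real p)"
      using Lm Am by (intro prod_union_le) auto
    also have "\<dots> \<le> z" using Am(4) l1 by (simp add: field_simps)
    finally have "(\<Prod>p\<in>A \<union> L. real p) \<le> z" .
    thus "q \<in> Q2" unfolding Q2_def SF_def using q Lm Am by auto
  qed
  have finQ2: "finite Q2"
  proof (rule finite_subset[of _ "Pow {..nat \<lfloor>z\<rfloor>} \<times> Pow {..nat \<lfloor>z\<rfloor>}"])
    show "Q2 \<subseteq> Pow {..nat \<lfloor>z\<rfloor>} \<times> Pow {..nat \<lfloor>z\<rfloor>}"
      unfolding Q2_def using SF_sub[of y z] by auto
  qed auto
  have "(\<Sum>L\<in>SF y z. (\<Prod>p\<in>L. w p) *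
           (\<Sum>A\<in>SF y (z / (\<Prod>p\<in>L. real p)). (\<Prod>p\<in>A. g p) * ln (z / (\<Prod>p\<in>L. real p) / (\<Prod>p\<in>A. real p))))
      = sum F1 Q1"
    unfolding Q1_def F1_def by (subst sum.Sigma[symmetric]) (auto simp: SF_fin sum_distrib_left)
  also have "\<dots> \<le> sum F2 Q1"
  proof (rule sum_mono)
    fix q assume q: "q \<in> Q1"
    then obtain L A where qLA: "q = (L, A)" and L: "L \<in> SF y z" and A: "A \<in> SF y (z / (\<Prod>p\<in>L. real p))"
      unfolding Q1_def by auto
    note Lm = SF_memD[OF L] and Am = SF_memD[OF A]
    have l1: "1 \<le> (\<Prod>p\<in>L. real p)" using Lm by (intro prod_real_ge1) auto
    have a1: "1 \<le> (\<Prod>p\<in>A. real p)" using Am by (intro prod_real_ge1) auto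
    have u1: "1 \<le> (\<Prod>p\<in>A \<union> L. real p)" using Am Lm by (intro prod_real_ge1) auto
    have "(\<Prod>p\<in>A \<union> L. real p) \<le> (\<Prod>p\<in>A. real p) * (\<Prod>p\<in>L. real p)"
      using Lm Am by (intro prod_union_le) auto
    have pz: "(\<Prod>p\<in>A. real p) * (\<Prod>p\<in>L. real p) \<le> z" using Am(4) l1 by (simp add: field_simps)
    have "z / (\<Prod>p\<in>L. real p) / (\<Prod>p\<in>A. real p) = z / ((\<Prod>p\<in>A. real p) * (\<Prod>p\<in>L. real p))"
      by (simp add: field_simps)
    also have "\<dots> \<le> z / (\<Prod>p\<in>A \<union> L. real p)"
      using \<open>(\<Prod>p\<in>A \<union> L. real p) \<le> _\<close> u1 pz by (intro divide_left_mono) auto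
    finally have le: "z / (\<Prod>p\<in>L. real p) / (\<Prod>p\<in>A. real p) \<le> z / (\<Prod>p\<in>A \<union> L. real p)" .
    have "1 \<le> (\<Prod>p\<in>A. real p) * (\<Prod>p\<in>L. real p)" using l1 a1 by (metis mult_mono' mult_1 zero_le_one)
    hence "0 < z" using pz by linarith
    hence pos: "0 < z / (\<Prod>p\<in>L. real p) / (\<Prod>p\<in>A. real p)" using l1 a1 by simp
    have "ln (z / (\<Prod>p\<in>L. real p) / (\<Prod>p\<in>A. real p)) \<le> ln (z / (\<Prod>p\<in>A \<union> L. real p))"
      using le pos by simp
    moreover have "0 \<le> (\<Prod>p\<in>L. w p)" "0 \<le> (\<Prod>p\<in>A. g p)" using nn[of L A] Q1Q2 q qLA by auto
    ultimately show "F1 q \<le> F2 q" unfolding F1_def F2_def qLA by (simp add: mult_left_mono)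
  qed
  also have "\<dots> \<le> sum F2 Q2"
  proof (rule sum_mono2[OF finQ2 Q1Q2])
    fix q assume "q \<in> Q2 - Q1"
    then obtain L A where qLA: "q = (L, A)" and q2: "(L, A) \<in> Q2" by (cases q) auto
    have "1 \<le> (\<Prod>p\<in>A \<union> L. real p)" using memQ2[OF q2] by (intro prod_real_ge1) auto
    hence "0 \<le> ln (z / (\<Prod>p\<in>A \<union> L. real p))" using memQ2[OF q2] by (simp add: field_simps)
    thus "0 \<le> F2 q" unfolding F2_def qLA using nn[OF q2] by simp
  qed
  also have "\<dots> = (\<Sum>C\<in>SF y z. sum F2 {q\<in>Q2. (\<lambda>(L, A). A \<union> L) q = C})"
    by (rule sum.group[symmetric]) (use finQ2 SF_fin in \<open>auto simp: Q2_def\<close>)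
  also have "\<dots> = (\<Sum>C\<in>SF y z. (\<Prod>p\<in>C. w p + g p + w p * g p) * ln (z / (\<Prod>p\<in>C. real p)))"
  proof (rule sum.cong[OF refl])
    fix C assume C: "C \<in> SF y z"
    have E: "{q\<in>Q2. (\<lambda>(L, A). A \<union> L) q = C} = {(X, Y). X \<union> Y = C}"
      unfolding Q2_def using C by (auto simp: Un_commute)
    have "sum F2 {(X, Y). X \<union> Y = C} = (\<Sum>(X, Y)\<in>{(X, Y). X \<union> Y = C}. ((\<Prod>p\<in>X. w p) * (\<Prod>p\<in>Y. g p)) * ln (z / (\<Prod>p\<in>C. real p)))"
      unfolding F2_def by (intro sum.cong) (auto simp: Un_commute)
    also have "\<dots> = (\<Sum>(X, Y)\<in>{(X, Y). X \<union> Y = C}. (\<Prod>p\<in>X. w p) * (\<Prod>p\<in>Y. g p)) * ln (z / (\<Prod>p\<in>C. real p))"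
      by (simp add: sum_distrib_right case_prod_unfold)
    also have "\<dots> = (\<Prod>p\<in>C. w p + g p + w p * g p) * ln (z / (\<Prod>p\<in>C. real p))"
      using U_identity[of C w g] SF_memD(1)[OF C] by simp
    finally show "sum F2 {q\<in>Q2. (\<lambda>(L, A). A \<union> L) q = C} = (\<Prod>p\<in>C. w p + g p + w p * g p) * ln (z / (\<Prod>p\<in>C. real p))"
      unfolding E .
  qed
  finally show ?thesis unfolding y_def .
qed


lemma d2:
  fixes k :: nat and z :: real
  shows "(\<Prod>p\<in>{p::nat. prime p \<and> p \<le> k + 1}. 1 - 1 / real p) *
      (\<Sum>C\<in>SF (real (k+1)) z. (\<Prod>p\<in>C. real k / (real p - real (k+1))) * ln (z / (\<Prod>p\<in>C. real p)))
    \<le> (\<Sum>S\<in>SF (real (k+1)) z. \<Prod>p\<in>S. real (k+1) / (real p - real (k+1)))"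
proof -
  define D0 where "D0 = {p::nat. prime p \<and> p \<le> k + 1}"
  define Pz where "Pz = {p::nat. prime p \<and> real p \<le> z}"
  define a' where "a' = (\<lambda>p::nat. real k * real p / ((real p - 1) * (real p - real (k+1))))"
  define b where "b = (\<lambda>p::nat. 1 / (real p - 1))"
  define c2 where "c2 = (\<Prod>p\<in>D0. 1 - 1 / real p)"
  have finD0: "finite D0" unfolding D0_def by (rule finite_subset[of _ "{..k+1}"]) auto
  have finPz: "finite Pz" unfolding Pz_def using fin_primes_le by simp
  have big: "prime p \<Longrightarrow> real (k+1) < real p \<Longrightarrow> real (k + 2) \<le> real p" for p
    by (metis Suc_eq_plus1 add_2_eq_Suc' add_Suc_right less_eq_Suc_le of_nat_le_iff of_nat_less_iff)
  have id1: "a' p + b p = real (k+1) / (real p - real (k+1))" if "prime p" "real (k+1) < real p" for p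
  proof -
    have "real (k+2) \<le> real p" using big that by blast
    hence h: "real p - 1 \<noteq> 0" "real p - real (k+1) \<noteq> 0" by auto
    have e: "b p = (real p - real (k+1)) / ((real p - 1) * (real p - real (k+1)))"
      unfolding b_def using h by simp
    have "a' p + b p = (real k * real p + (real p - real (k+1))) / ((real p - 1) * (real p - real (k+1)))"
      unfolding e unfolding a'_def by (simp only: add_divide_distrib)
    also have "real k * real p + (real p - real (k+1)) = real (k+1) * (real p - 1)"
      by (simp add: algebra_simps)
    also have "real (k+1) * (real p - 1) / ((real p - 1) * (real p - real (k+1))) = real (k+1) / (real p - real (k+1))"
      using h by simp
    finally show ?thesis .
  qed
  have id2: "a' p * (1 - 1 / real p) = real k / (real p - real (k+1))" if "prime p" "real (k+1) < real p" for p
  proof -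
    have "real (k+2) \<le> real p" using big that by blast
    hence h: "real p - 1 \<noteq> 0" "real p - real (k+1) \<noteq> 0" "real p \<noteq> 0" by auto
    have "a' p * (1 - 1 / real p) = real k * ((real p - 1) / real p * real p) / ((real p - 1) * (real p - real (k+1)))"
      unfolding a'_def using h by (simp add: field_simps)
    also have "\<dots> = real k / (real p - real (k+1))" using h by simp
    finally show ?thesis .
  qed
  have a'0: "0 \<le> a' p" if "prime p" "real (k+1) < real p" for p
  proof -
    have "real (k+2) \<le> real p" using big that by blast
    thus ?thesis unfolding a'_def by (intro divide_nonneg_pos mult_nonneg_nonneg mult_pos_pos) auto
  qed
  have "(\<Sum>S\<in>SF (real (k+1)) z. \<Prod>p\<in>S. real (k+1) / (real p - real (k+1)))
      = (\<Sum>S\<in>SF (real (k+1)) z. \<Prod>p\<in>S. a' p + b p)"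
    by (intro sum.cong[OF refl] prod.cong[OF refl]) (auto simp: id1 SF_def)
  also have "\<dots> = (\<Sum>C\<in>SF (real (k+1)) z. (\<Prod>p\<in>C. a' p) *
        (\<Sum>B\<in>{B. B \<subseteq> Pz - (D0 \<union> C) \<and> (\<Prod>p\<in>B. real p) \<le> z / (\<Prod>p\<in>C. real p)}. \<Prod>p\<in>B. b p))"
    unfolding Pz_def D0_def by (rule d2_reindex)
  also have "\<dots> = (\<Sum>C\<in>SF (real (k+1)) z. (\<Prod>p\<in>C. a' p) * Gs (Pz - (D0 \<union> C)) (z / (\<Prod>p\<in>C. real p)))"
    unfolding Gs_def b_def by simp
  finally have R: "(\<Sum>S\<in>SF (real (k+1)) z. \<Prod>p\<in>S. real (k+1) / (real p - real (k+1)))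
      = (\<Sum>C\<in>SF (real (k+1)) z. (\<Prod>p\<in>C. a' p) * Gs (Pz - (D0 \<union> C)) (z / (\<Prod>p\<in>C. real p)))" .
  have "c2 * (\<Sum>C\<in>SF (real (k+1)) z. (\<Prod>p\<in>C. real k / (real p - real (k+1))) * ln (z / (\<Prod>p\<in>C. real p)))
      = (\<Sum>C\<in>SF (real (k+1)) z. (\<Prod>p\<in>C. a' p) * (c2 * (\<Prod>p\<in>C. 1 - 1 / real p) * ln (z / (\<Prod>p\<in>C. real p))))"
  proof -
    have "(\<Prod>p\<in>C. real k / (real p - real (k+1))) = (\<Prod>p\<in>C. a' p) * (\<Prod>p\<in>C. 1 - 1 / real p)"
      if "C \<in> SF (real (k+1)) z" for C
      using that unfolding prod.distrib[symmetric] by (intro prod.cong[OF refl]) (auto simp: id2 SF_def)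
    thus ?thesis by (simp add: sum_distrib_left algebra_simps)
  qed
  also have "\<dots> \<le> (\<Sum>C\<in>SF (real (k+1)) z. (\<Prod>p\<in>C. a' p) * Gs (Pz - (D0 \<union> C)) (z / (\<Prod>p\<in>C. real p)))"
  proof (rule sum_mono)
    fix C assume C: "C \<in> SF (real (k+1)) z"
    note Cm = SF_memD[OF C]
    have c1: "1 \<le> (\<Prod>p\<in>C. real p)" using Cm by (intro prod_real_ge1) auto
    have y1: "1 \<le> z / (\<Prod>p\<in>C. real p)" using c1 Cm(4) by (simp add: field_simps)
    have z0: "0 \<le> z" using c1 Cm(4) by linarith
    have yz: "z / (\<Prod>p\<in>C. real p) \<le> z" using c1 z0 by (simp add: divide_le_eq mult_le_cancel_left1 mult.commute)
    have disj: "D0 \<inter> C = {}" using Cm(3) unfolding D0_def by force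
    have "(\<Prod>p\<in>D0 \<union> C. 1 - 1 / real p) * ln (z / (\<Prod>p\<in>C. real p)) \<le> Gs (Pz - (D0 \<union> C)) (z / (\<Prod>p\<in>C. real p))"
    proof (rule L1[OF y1 finPz])
      show "finite (D0 \<union> C)" using finD0 Cm by auto
      show "\<forall>p\<in>Pz \<union> (D0 \<union> C). prime p" using Cm unfolding Pz_def D0_def by auto
      show "{p. prime p \<and> real p \<le> z / (\<Prod>p\<in>C. real p)} \<subseteq> Pz \<union> (D0 \<union> C)"
        using yz unfolding Pz_def by auto
    qed
    moreover have "(\<Prod>p\<in>D0 \<union> C. 1 - 1 / real p) = c2 * (\<Prod>p\<in>C. 1 - 1 / real p)"
      unfolding c2_def by (rule prod.union_disjoint) (use finD0 Cm disj in auto)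
    moreover have "0 \<le> (\<Prod>p\<in>C. a' p)" using Cm a'0 by (intro prod_nonneg) auto
    ultimately show "(\<Prod>p\<in>C. a' p) * (c2 * (\<Prod>p\<in>C. 1 - 1 / real p) * ln (z / (\<Prod>p\<in>C. real p)))
        \<le> (\<Prod>p\<in>C. a' p) * Gs (Pz - (D0 \<union> C)) (z / (\<Prod>p\<in>C. real p))"
      by (simp add: mult_left_mono)
  qed
  finally have F: "c2 * (\<Sum>C\<in>SF (real (k+1)) z. (\<Prod>p\<in>C. real k / (real p - real (k+1))) * ln (z / (\<Prod>p\<in>C. real p)))
      \<le> (\<Sum>C\<in>SF (real (k+1)) z. (\<Prod>p\<in>C. a' p) * Gs (Pz - (D0 \<union> C)) (z / (\<Prod>p\<in>C. real p)))" .
  show ?thesis unfolding D0_def[symmetric] unfolding c2_def[symmetric] R using F .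
qed


lemma step_integral:
  fixes c :: real and q y :: real
  assumes "1 \<le> q" "q \<le> y"
  shows "((\<lambda>t. if q \<le> t then c / t else 0) has_integral (c * ln y - c * ln q)) {1..y}"
proof -
  have "((\<lambda>t. c / t) has_integral (c * ln y - c * ln q)) {q..y}"
  proof -
    have "((\<lambda>t. c / t) has_integral ((\<lambda>t. c * ln t) y - (\<lambda>t. c * ln t) q)) {q..y}"
    proof (rule fundamental_theorem_of_calculus[OF assms(2)])
      fix x assume x: "x \<in> {q..y}"
      hence x0: "0 < x" using assms by auto
      have "((\<lambda>t. c * ln t) has_real_derivative c * inverse x) (at x within {q..y})"
        by (rule DERIV_cmult, rule DERIV_ln[OF x0, THEN has_field_derivative_at_within])
      thus "((\<lambda>t. c * ln t) has_vector_derivative c / x) (at x within {q..y})"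
        by (simp add: has_real_derivative_iff_has_vector_derivative divide_inverse)
    qed
    thus ?thesis by simp
  qed
  hence H: "((\<lambda>t. if t \<in> {q..y} then c / t else 0) has_integral (c * ln y - c * ln q)) {1..y}"
    using has_integral_restrict_closed_subinterval[of "\<lambda>t. c / t" "c * ln y - c * ln q" q y 1 y] assms
    unfolding cbox_interval by auto
  show ?thesis by (rule has_integral_eq[OF _ H]) (use assms in auto)
qed

lemma integral_Fk:
  fixes k :: nat and y :: real
  assumes y: "1 \<le> y"
  shows "integral {1..y} (\<lambda>t. Fk k t / t)
       = (\<Sum>A\<in>SF (real k) y. (\<Prod>p\<in>A. real k / (real p - real k)) * ln (y / (\<Prod>p\<in>A. real p)))"
proof -
  define Q where "Q = {q::nat. 0 < q \<and> real q \<le> y \<and> coprime q (primorial (real k))}"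
  define c where "c = (\<lambda>q. mu2 q * (\<Prod>p\<in>prime_factors q. real k / (real p - real k)))"
  have finQ: "finite Q" unfolding Q_def
    by (rule finite_subset[of _ "{..nat \<lfloor>y\<rfloor>}"]) (auto intro: nat_le_floor)
  have eq: "Fk k t / t = (\<Sum>q\<in>Q. (\<lambda>q t. if real q \<le> t then c q / t else 0) q t)" if t: "t \<in> {1..y}" for t
  proof -
    have "{q::nat. 0 < q \<and> real q \<le> t \<and> coprime q (primorial (real k))} = {q\<in>Q. real q \<le> t}"
      unfolding Q_def using t by auto
    hence "Fk k t = (\<Sum>q\<in>{q\<in>Q. real q \<le> t}. c q)" unfolding Fk_def c_def by simp
    also have "\<dots> = (\<Sum>q\<in>Q. if real q \<le> t then c q else 0)" by (rule sum.inter_filter[OF finQ])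
    finally have "Fk k t / t = (\<Sum>q\<in>Q. (if real q \<le> t then c q else 0) / t)"
      by (simp add: sum_divide_distrib)
    also have "\<dots> = (\<Sum>q\<in>Q. if real q \<le> t then c q / t else 0)"
      by (rule sum.cong) simp_all
    finally show ?thesis by simp
  qed
  have "((\<lambda>t. \<Sum>q\<in>Q. (\<lambda>q t. if real q \<le> t then c q / t else 0) q t) has_integral
          (\<Sum>q\<in>Q. c q * ln y - c q * ln (real q))) {1..y}"
  proof (rule has_integral_sum[OF finQ])
    fix q assume "q \<in> Q"
    hence "1 \<le> real q" "real q \<le> y" unfolding Q_def by auto
    thus "((\<lambda>t. if real q \<le> t then c q / t else 0) has_integral (c q * ln y - c q * ln (real q))) {1..y}"
      by (rule step_integral)
  qed
  hence "((\<lambda>t. Fk k t / t) has_integral (\<Sum>q\<in>Q. c q * ln y - c q * ln (real q))) {1..y}"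
    by (rule has_integral_eq[rotated]) (simp add: eq)
  hence "integral {1..y} (\<lambda>t. Fk k t / t) = (\<Sum>q\<in>Q. c q * ln y - c q * ln (real q))"
    by (rule integral_unique)
  also have "\<dots> = (\<Sum>q\<in>Q. mu2 q * ((\<Prod>p\<in>prime_factors q. real k / (real p - real k)) * ln (y / real q)))"
  proof (rule sum.cong[OF refl])
    fix q assume "q \<in> Q"
    hence "0 < real q" "0 < y" using y unfolding Q_def by auto
    thus "c q * ln y - c q * ln (real q) = mu2 q * ((\<Prod>p\<in>prime_factors q. real k / (real p - real k)) * ln (y / real q))"
      unfolding c_def by (simp add: ln_div algebra_simps)
  qed
  also have "\<dots> = (\<Sum>A\<in>SF (real k) y. (\<Prod>p\<in>prime_factors (\<Prod>p\<in>A. p). real k / (real p - real k)) * ln (y / real (\<Prod>p\<in>A. p)))"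
    unfolding Q_def by (rule G1)
  also have "\<dots> = (\<Sum>A\<in>SF (real k) y. (\<Prod>p\<in>A. real k / (real p - real k)) * ln (y / (\<Prod>p\<in>A. real p)))"
  proof (rule sum.cong[OF refl])
    fix A assume A: "A \<in> SF (real k) y"
    have "prime_factors (\<Prod>p\<in>A. p) = A" by (rule pf_prod[OF SF_memD(1,2)[OF A]])
    thus "(\<Prod>p\<in>prime_factors (\<Prod>p\<in>A. p). real k / (real p - real k)) * ln (y / real (\<Prod>p\<in>A. p))
        = (\<Prod>p\<in>A. real k / (real p - real k)) * ln (y / (\<Prod>p\<in>A. real p))" by simp
  qed
  finally show ?thesis .
qed


lemma primorial_pos: "0 < primorial y"
  unfolding primorial_def by (rule prod_pos) (auto simp: prime_gt_0_nat)

lemma primorial_Suc: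
  "primorial (real (k+1)) = primorial (real k) * (if prime (k+1) then k+1 else 1)"
proof -
  have fin: "finite {p::nat. prime p \<and> real p \<le> real k}" by (rule fin_primes_le)
  have E: "{p::nat. prime p \<and> real p \<le> real (k+1)} = {p. prime p \<and> real p \<le> real k} \<union> {p. p = k+1 \<and> prime p}"
    by auto
  show ?thesis
  proof (cases "prime (k+1)")
    case True
    hence "{p::nat. prime p \<and> real p \<le> real (k+1)} = insert (k+1) {p. prime p \<and> real p \<le> real k}"
      using E by auto
    thus ?thesis unfolding primorial_def using True fin by simp
  next
    case False
    hence "{p::nat. prime p \<and> real p \<le> real (k+1)} = {p. prime p \<and> real p \<le> real k}"
      using E by auto
    thus ?thesis unfolding primorial_def using False by simp
  qed
qed

lemma J_compare:
  fixes k :: nat and y :: real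
  shows "real (primorial (real k)) / real (primorial (real (k+1))) *
      (\<Sum>A\<in>SF (real k) y. (\<Prod>p\<in>A. real k / (real p - real k)) * ln (y / (\<Prod>p\<in>A. real p)))
    \<le> (\<Sum>A\<in>SF (real (k+1)) y. (\<Prod>p\<in>A. real k / (real p - real k)) * ln (y / (\<Prod>p\<in>A. real p)))"
proof -
  define F where "F = (\<lambda>A. (\<Prod>p\<in>A. real k / (real p - real k)) * ln (y / (\<Prod>p\<in>A. real p)))"
  have Fnn: "0 \<le> F A" if A: "A \<in> SF (real k) y" for A
  proof -
    note Am = SF_memD[OF A]
    have "0 \<le> (\<Prod>p\<in>A. real k / (real p - real k))"
      using Am(3) by (intro prod_nonneg) auto
    moreover have "1 \<le> (\<Prod>p\<in>A. real p)" using Am by (intro prod_real_ge1) auto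
    hence "0 \<le> ln (y / (\<Prod>p\<in>A. real p))" using Am(4) by (simp add: field_simps)
    ultimately show ?thesis unfolding F_def by simp
  qed
  have pk: "0 < real (primorial (real k))" using primorial_pos by simp
  have sub: "SF (real (k+1)) y \<subseteq> SF (real k) y" unfolding SF_def by auto
  show ?thesis
  proof (cases "prime (k+1)")
    case False
    have "SF (real (k+1)) y = SF (real k) y"
    proof
      show "SF (real k) y \<subseteq> SF (real (k+1)) y"
      proof
        fix A assume A: "A \<in> SF (real k) y"
        have "\<forall>p\<in>A. real (k+1) < real p"
        proof
          fix p assume p: "p \<in> A"
          have "prime p" "k < p" using SF_memD(2,3)[OF A] p by auto
          hence "k + 1 < p" using False by (metis Suc_eq_plus1 Suc_lessI)
          thus "real (k+1) < real p" by (simp only: of_nat_less_iff)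
        qed
        thus "A \<in> SF (real (k+1)) y" using A unfolding SF_def by auto
      qed
    qed (rule sub)
    moreover have "real (primorial (real k)) / real (primorial (real (k+1))) = 1"
      using primorial_Suc[of k] False pk by simp
    ultimately show ?thesis unfolding F_def[symmetric] by simp
  next
    case True
    define S2 where "S2 = {A \<in> SF (real k) y. k + 1 \<in> A}"
    have finS: "finite (SF (real k) y)" by (rule SF_fin)
    have split: "SF (real k) y = SF (real (k+1)) y \<union> S2"
    proof
      show "SF (real k) y \<subseteq> SF (real (k+1)) y \<union> S2"
      proof
        fix A assume A: "A \<in> SF (real k) y"
        show "A \<in> SF (real (k+1)) y \<union> S2"
        proof (cases "k + 1 \<in> A")
          case True thus ?thesis using A unfolding S2_def by auto
        next
          case False
          have "\<forall>p\<in>A. real (k+1) < real p"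
          proof
            fix p assume p: "p \<in> A"
            have "k < p" using SF_memD(3)[OF A] p by auto
            hence "k + 1 < p" using False p by (metis Suc_eq_plus1 Suc_lessI)
            thus "real (k+1) < real p" by (simp only: of_nat_less_iff)
          qed
          thus ?thesis using A unfolding SF_def by auto
        qed
      qed
    next
      show "SF (real (k+1)) y \<union> S2 \<subseteq> SF (real k) y" using sub unfolding S2_def by auto
    qed
    have disj: "SF (real (k+1)) y \<inter> S2 = {}" unfolding S2_def SF_def by auto
    have finS2: "finite S2" unfolding S2_def using finS by auto
    have finS1: "finite (SF (real (k+1)) y)" by (rule SF_fin)
    have "sum F S2 \<le> (\<Sum>A\<in>S2. real k * F (A - {k+1}))"
    proof (rule sum_mono)
      fix A assume A: "A \<in> S2"
      hence A1: "A \<in> SF (real k) y" and kA: "k + 1 \<in> A" unfolding S2_def by auto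
      note Am = SF_memD[OF A1]
      have g: "(\<Prod>p\<in>A. real k / (real p - real k)) = real k * (\<Prod>p\<in>A - {k+1}. real k / (real p - real k))"
        using prod.remove[OF Am(1) kA, of "\<lambda>p. real k / (real p - real k)"] by simp
      have n: "(\<Prod>p\<in>A. real p) = real (k+1) * (\<Prod>p\<in>A - {k+1}. real p)"
        using prod.remove[OF Am(1) kA, of real] by simp
      have n1: "1 \<le> (\<Prod>p\<in>A - {k+1}. real p)" using Am by (intro prod_real_ge1) auto
      have z: "real (k+1) * (\<Prod>p\<in>A - {k+1}. real p) \<le> y" using n Am(4) by simp
      have "1 * 1 \<le> real (k+1) * (\<Prod>p\<in>A - {k+1}. real p)"
        by (rule mult_mono) (use n1 in auto)
      hence y0: "0 < y" using z by linarith
      have "y / (\<Prod>p\<in>A. real p) \<le> y / (\<Prod>p\<in>A - {k+1}. real p)"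
        unfolding n using n1 y0 by (intro divide_left_mono) (auto intro: mult_pos_pos)
      moreover have "0 < y / (\<Prod>p\<in>A. real p)" using n n1 y0 by simp
      ultimately have l: "ln (y / (\<Prod>p\<in>A. real p)) \<le> ln (y / (\<Prod>p\<in>A - {k+1}. real p))" by simp
      have "0 \<le> (\<Prod>p\<in>A - {k+1}. real k / (real p - real k))"
        using Am(3) by (intro prod_nonneg) auto
      thus "F A \<le> real k * F (A - {k+1})" unfolding F_def g using l
        by (simp add: mult_left_mono mult.assoc)
    qed
    also have "\<dots> = real k * (\<Sum>A\<in>(\<lambda>A. A - {k+1}) ` S2. F A)"
      by (subst sum.reindex) (auto simp: sum_distrib_left inj_on_def S2_def)
    also have "\<dots> \<le> real k * sum F (SF (real (k+1)) y)"
    proof (rule mult_left_mono[OF sum_mono2[OF finS1]])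
      show "(\<lambda>A. A - {k+1}) ` S2 \<subseteq> SF (real (k+1)) y"
      proof
        fix B assume "B \<in> (\<lambda>A. A - {k+1}) ` S2"
        then obtain A where A: "A \<in> S2" and B: "B = A - {k+1}" by auto
        hence A1: "A \<in> SF (real k) y" and kA: "k + 1 \<in> A" unfolding S2_def by auto
        note Am = SF_memD[OF A1]
        have "(\<Prod>p\<in>A. real p) = real (k+1) * (\<Prod>p\<in>A - {k+1}. real p)"
          using prod.remove[OF Am(1) kA, of real] by simp
        moreover have "1 \<le> (\<Prod>p\<in>A - {k+1}. real p)" using Am by (intro prod_real_ge1) auto
        ultimately have "(\<Prod>p\<in>A - {k+1}. real p) \<le> (\<Prod>p\<in>A. real p)" by simp
        hence "(\<Prod>p\<in>B. real p) \<le> y" using Am(4) B by simp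
        moreover have "\<forall>p\<in>B. real (k+1) < real p"
        proof
          fix p assume p: "p \<in> B"
          have "k < p" "p \<noteq> k + 1" using SF_memD(3)[OF A1] p B by auto
          hence "k + 1 < p" by simp
          thus "real (k+1) < real p" by (simp only: of_nat_less_iff)
        qed
        ultimately show "B \<in> SF (real (k+1)) y" using Am B unfolding SF_def by auto
      qed
      show "0 \<le> F b" if "b \<in> SF (real (k+1)) y - (\<lambda>A. A - {k+1}) ` S2" for b
        using that sub Fnn by auto
    qed simp
    finally have S2le: "sum F S2 \<le> real k * sum F (SF (real (k+1)) y)" .
    have "sum F (SF (real k) y) = sum F (SF (real (k+1)) y) + sum F S2"
      unfolding split by (rule sum.union_disjoint[OF finS1 finS2 disj])
    also have "\<dots> \<le> real (k+1) * sum F (SF (real (k+1)) y)" using S2le by (simp add: algebra_simps)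
    finally have main: "sum F (SF (real k) y) \<le> real (k+1) * sum F (SF (real (k+1)) y)" .
    have r: "real (primorial (real k)) / real (primorial (real (k+1))) = 1 / real (k+1)"
    proof -
      have e: "primorial (real (k+1)) = primorial (real k) * (k+1)" using primorial_Suc[of k] True by simp
      show ?thesis unfolding e of_nat_mult using pk by (simp add: divide_simps)
    qed
    show ?thesis unfolding F_def[symmetric] r using main by (simp add: field_simps)
  qed
qed


lemma tau_bound:
  assumes sq: "squarefree (l::nat)"
  shows "tau n l \<le> n ^ card (prime_factors l)"
proof -
  define TS where "TS = {ds :: nat list. length ds = n \<and> (\<forall>d\<in>set ds. 0 < d) \<and> prod_list ds = l}"
  define \<Phi> where "\<Phi> = (\<lambda>ds::nat list. restrict (\<lambda>p. LEAST i. i < n \<and> p dvd ds ! i) (prime_factors l))"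
  have pl: "prod_list ds = (\<Prod>i\<in>{0..<length ds}. ds ! i)" for ds :: "nat list"
    by (rule prod.list_conv_set_nth)
  have ex: "\<exists>i<n. p dvd ds ! i" if ds: "ds \<in> TS" and p: "p \<in> prime_factors l" for ds p
  proof -
    have "p dvd (\<Prod>i\<in>{0..<length ds}. ds ! i)" using ds p pl[of ds] unfolding TS_def by auto
    hence "\<exists>i\<in>{0..<length ds}. p dvd ds ! i" using p by (subst (asm) prime_dvd_prod_iff) auto
    thus ?thesis using ds unfolding TS_def by auto
  qed
  have uniq: "i = j" if ds: "ds \<in> TS" and p: "prime p" and ij: "i < n" "j < n"
    and di: "p dvd ds ! i" and dj: "p dvd ds ! j" for ds p i j
  proof (rule ccontr)
    assume ne: "i \<noteq> j"
    have len: "length ds = n" and prl: "prod_list ds = l" using ds unfolding TS_def by auto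
    have fin: "finite {0..<n}" by simp
    have "(\<Prod>k\<in>{0..<n}. ds ! k) = ds ! i * (\<Prod>k\<in>{0..<n} - {i}. ds ! k)"
      using ij by (intro prod.remove) auto
    also have "(\<Prod>k\<in>{0..<n} - {i}. ds ! k) = ds ! j * (\<Prod>k\<in>{0..<n} - {i} - {j}. ds ! k)"
      using ij ne by (intro prod.remove) auto
    finally have "l = ds ! i * ds ! j * (\<Prod>k\<in>{0..<n} - {i} - {j}. ds ! k)"
      using pl[of ds] len prl by (simp add: mult.assoc)
    hence "ds ! i * ds ! j dvd l" by simp
    moreover have "p * p dvd ds ! i * ds ! j" using di dj by (rule mult_dvd_mono)
    ultimately have "p\<^sup>2 dvd l" by (simp add: power2_eq_square dvd_trans)
    hence "p dvd 1" using squarefreeD[OF sq] by blast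
    thus False using p by auto
  qed
  have ndvd: "ds ! i dvd l" if ds: "ds \<in> TS" and i: "i < n" for ds i
  proof -
    have "ds ! i dvd (\<Prod>k\<in>{0..<length ds}. ds ! k)" using ds i unfolding TS_def by (intro dvd_prodI) auto
    thus ?thesis using pl[of ds] ds unfolding TS_def by auto
  qed
  have l0: "l \<noteq> 0" using sq by (metis not_squarefree_0)
  have pfi: "prime_factors (ds ! i) = {p \<in> prime_factors l. \<Phi> ds p = i}" if ds: "ds \<in> TS" and i: "i < n" for ds i
  proof
    show "prime_factors (ds ! i) \<subseteq> {p \<in> prime_factors l. \<Phi> ds p = i}"
    proof
      fix p assume p: "p \<in> prime_factors (ds ! i)"
      have pr: "prime p" and pd: "p dvd ds ! i" using p by auto
      have pl': "p \<in> prime_factors l" using pr pd ndvd[OF ds i] l0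
        by (auto simp: in_prime_factors_iff intro: dvd_trans)
      have "(LEAST j. j < n \<and> p dvd ds ! j) = i"
      proof (rule Least_equality)
        show "i < n \<and> p dvd ds ! i" using i pd by auto
        show "i \<le> j" if "j < n \<and> p dvd ds ! j" for j using uniq[OF ds pr i] pd that by auto
      qed
      thus "p \<in> {p \<in> prime_factors l. \<Phi> ds p = i}" using pl' unfolding \<Phi>_def by auto
    qed
  next
    show "{p \<in> prime_factors l. \<Phi> ds p = i} \<subseteq> prime_factors (ds ! i)"
    proof
      fix p assume p: "p \<in> {p \<in> prime_factors l. \<Phi> ds p = i}"
      hence pl': "p \<in> prime_factors l" and L: "(LEAST j. j < n \<and> p dvd ds ! j) = i" unfolding \<Phi>_def by auto
      have "(LEAST j. j < n \<and> p dvd ds ! j) < n \<and> p dvd ds ! (LEAST j. j < n \<and> p dvd ds ! j)"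
        by (rule LeastI_ex) (use ex[OF ds pl'] in auto)
      hence "p dvd ds ! i" using L by simp
      moreover have "0 < ds ! i" using ds i unfolding TS_def by auto
      ultimately show "p \<in> prime_factors (ds ! i)" using pl' by (auto simp: in_prime_factors_iff)
    qed
  qed
  have inj: "inj_on \<Phi> TS"
  proof (rule inj_onI)
    fix ds ds' assume ds: "ds \<in> TS" and ds': "ds' \<in> TS" and eq: "\<Phi> ds = \<Phi> ds'"
    show "ds = ds'"
    proof (rule nth_equalityI)
      show "length ds = length ds'" using ds ds' unfolding TS_def by auto
      fix i assume "i < length ds"
      hence i: "i < n" using ds unfolding TS_def by auto
      have "prime_factors (ds ! i) = prime_factors (ds' ! i)" using pfi[OF ds i] pfi[OF ds' i] eq by simp
      moreover have "squarefree (ds ! i)" "squarefree (ds' ! i)"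
        using squarefree_mono[OF ndvd[OF ds i] sq] squarefree_mono[OF ndvd[OF ds' i] sq] by auto
      ultimately show "ds ! i = ds' ! i" using prod_pf_sqf by metis
    qed
  qed
  have img: "\<Phi> ` TS \<subseteq> PiE (prime_factors l) (\<lambda>_. {..<n})"
  proof
    fix f assume "f \<in> \<Phi> ` TS"
    then obtain ds where ds: "ds \<in> TS" and f: "f = \<Phi> ds" by auto
    have "(LEAST j. j < n \<and> p dvd ds ! j) < n" if p: "p \<in> prime_factors l" for p
    proof -
      have "(LEAST j. j < n \<and> p dvd ds ! j) < n \<and> p dvd ds ! (LEAST j. j < n \<and> p dvd ds ! j)"
        by (rule LeastI_ex) (use ex[OF ds p] in auto)
      thus ?thesis by simp
    qed
    thus "f \<in> PiE (prime_factors l) (\<lambda>_. {..<n})" unfolding f \<Phi>_def by auto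
  qed
  have "tau n l = card TS" unfolding tau_def TS_def by simp
  also have "\<dots> \<le> card (PiE (prime_factors l) (\<lambda>_. {..<n}))"
    by (rule card_inj_on_le[OF inj img]) (auto intro: finite_PiE)
  also have "\<dots> = n ^ card (prime_factors l)" by (simp add: card_PiE)
  finally show ?thesis .
qed


lemma ring3: "(x::real) + y + x * y = (1 + y) * (1 + x) - 1"
  by (simp add: algebra_simps)

lemma id3:
  fixes k p :: nat
  assumes "k + 1 < p"
  shows "real k / (real p * (real p - real (k+1))) + real k / (real p - real k)
       + real k / (real p * (real p - real (k+1))) * (real k / (real p - real k))
       = real k / (real p - real (k+1))"
proof -
  have "real (k + 1) < real p" using assms by (simp only: of_nat_less_iff)
  hence h1: "real p - real (k+1) \<noteq> 0" and h2: "real p - real k \<noteq> 0" and h3: "real p \<noteq> 0" by auto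
  have e1: "1 + real k / (real p - real k) = real p / (real p - real k)" using h2 by (simp add: field_simps)
  have e2: "1 + real k / (real p * (real p - real (k+1))) = (real p - 1) * (real p - real k) / (real p * (real p - real (k+1)))"
  proof -
    have h4: "real p * (real p - real (k+1)) \<noteq> 0" using h1 h3 by simp
    have "1 + real k / (real p * (real p - real (k+1))) = (1 * (real p * (real p - real (k+1))) + real k) / (real p * (real p - real (k+1)))"
      by (rule add_divide_eq_iff[OF h4])
    also have "1 * (real p * (real p - real (k+1))) + real k = (real p - 1) * (real p - real k)"
      by (simp add: algebra_simps)
    finally show ?thesis .
  qed
  have "real k / (real p * (real p - real (k+1))) + real k / (real p - real k)
       + real k / (real p * (real p - real (k+1))) * (real k / (real p - real k))
       = (1 + real k / (real p - real k)) * (1 + real k / (real p * (real p - real (k+1)))) - 1"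
    by (rule ring3)
  also have "\<dots> = real p / (real p - real k) * ((real p - 1) * (real p - real k) / (real p * (real p - real (k+1)))) - 1"
    unfolding e1 e2 ..
  also have "\<dots> = (real p - 1) / (real p - real (k+1)) - 1"
  proof -
    have "real p / (real p - real k) * ((real p - 1) * (real p - real k) / (real p * (real p - real (k+1))))
        = (real p * ((real p - 1) * (real p - real k))) / ((real p - real k) * (real p * (real p - real (k+1))))"
      by (rule times_divide_times_eq)
    also have "\<dots> = (real p - 1) / (real p - real (k+1))"
    proof -
      have hb: "(real p - real k) * (real p * (real p - real (k+1))) \<noteq> 0" using h1 h2 h3 by simp
      show ?thesis by (simp only: frac_eq_eq[OF hb h1]) (simp add: algebra_simps)
    qed
    finally show ?thesis by simp
  qed
  also have "\<dots> = real k / (real p - real (k+1))"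
    using h1 by (simp add: field_simps)
  finally show ?thesis .
qed


lemma Jk_nonneg:
  "0 \<le> (\<Sum>A\<in>SF (real k) y. (\<Prod>p\<in>A. real k / (real p - real k)) * ln (y / (\<Prod>p\<in>A. real p)))"
proof (rule sum_nonneg)
  fix A assume A: "A \<in> SF (real k) y"
  note Am = SF_memD[OF A]
  have "0 \<le> (\<Prod>p\<in>A. real k / (real p - real k))"
    using Am(3) by (intro prod_nonneg) auto
  moreover have "1 \<le> (\<Prod>p\<in>A. real p)" using Am by (intro prod_real_ge1) auto
  hence "0 \<le> ln (y / (\<Prod>p\<in>A. real p))" using Am(4) by (simp add: field_simps)
  ultimately show "0 \<le> (\<Prod>p\<in>A. real k / (real p - real k)) * ln (y / (\<Prod>p\<in>A. real p))" by simp
qed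

theorem mainTheorem8:
  fixes \<kappa> :: nat and z :: real
  assumes "\<kappa> \<ge> 1" and "z \<ge> 1"
  shows "Fk (\<kappa> + 1) z \<ge>
    real (primorial (real \<kappa>)) / real (primorial (real (\<kappa> + 1)))
    * (\<Prod>p\<in>{p::nat. prime p \<and> p \<le> \<kappa> + 1}. 1 - 1 / real p)
    * (\<Sum>l\<in>{l::nat. 0 < l \<and> real l \<le> z \<and> coprime l (primorial (real (\<kappa> + 1)))}.
         mu2 l * real (tau \<kappa> l) / (psi (\<kappa> + 1) l * real l)
         * integral {1 .. z / real l} (\<lambda>t. Fk \<kappa> t / t))"
proof -
  define C1 where "C1 = real (primorial (real \<kappa>)) / real (primorial (real (\<kappa> + 1)))"
  define C2 where "C2 = (\<Prod>p\<in>{p::nat. prime p \<and> p \<le> \<kappa> + 1}. 1 - 1 / real p)"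
  define I where "I = (\<lambda>y. integral {1 .. y} (\<lambda>t. Fk \<kappa> t / t))"
  define W where "W = (\<lambda>L::nat set. \<Prod>p\<in>L. real \<kappa> / (real p * (real p - real (\<kappa>+1))))"
  define J where "J = (\<lambda>y. \<Sum>A\<in>SF (real (\<kappa>+1)) y. (\<Prod>p\<in>A. real \<kappa> / (real p - real \<kappa>)) * ln (y / (\<Prod>p\<in>A. real p)))"
  define T where "T = (\<lambda>l::nat. real (tau \<kappa> l) / (psi (\<kappa> + 1) l * real l))"
  have C1nn: "0 \<le> C1" unfolding C1_def by simp
  have C2nn: "0 \<le> C2" unfolding C2_def
  proof (rule prod_nonneg)
    fix p :: nat assume "p \<in> {p. prime p \<and> p \<le> \<kappa> + 1}"
    hence "2 \<le> real p" using prime_ge2_real by blast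
    thus "0 \<le> 1 - 1 / real p" by simp
  qed
  have gt: "real (\<kappa>+1) < real p \<Longrightarrow> \<kappa> + 1 < p" for p by (simp only: of_nat_less_iff)
  have gt': "\<kappa> + 1 < p \<Longrightarrow> real (\<kappa>+1) < real p" for p by (simp only: of_nat_less_iff)
  have stepA: "(\<Sum>l\<in>{l::nat. 0 < l \<and> real l \<le> z \<and> coprime l (primorial (real (\<kappa> + 1)))}.
         mu2 l * real (tau \<kappa> l) / (psi (\<kappa> + 1) l * real l) * I (z / real l))
     = (\<Sum>L\<in>SF (real (\<kappa>+1)) z. T (\<Prod>p\<in>L. p) * I (z / real (\<Prod>p\<in>L. p)))"
  proof -
    have "(\<Sum>l\<in>{l::nat. 0 < l \<and> real l \<le> z \<and> coprime l (primorial (real (\<kappa> + 1)))}.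
         mu2 l * real (tau \<kappa> l) / (psi (\<kappa> + 1) l * real l) * I (z / real l))
      = (\<Sum>l\<in>{l::nat. 0 < l \<and> real l \<le> z \<and> coprime l (primorial (real (\<kappa> + 1)))}.
         mu2 l * (T l * I (z / real l)))"
      unfolding T_def by (intro sum.cong) auto
    also have "\<dots> = (\<Sum>L\<in>SF (real (\<kappa>+1)) z. T (\<Prod>p\<in>L. p) * I (z / real (\<Prod>p\<in>L. p)))"
      by (rule G1)
    finally show ?thesis .
  qed
  have stepB: "C1 * (T (\<Prod>p\<in>L. p) * I (z / real (\<Prod>p\<in>L. p))) \<le> W L * J (z / (\<Prod>p\<in>L. real p))"
    if L: "L \<in> SF (real (\<kappa>+1)) z" for L
  proof -
    note Lm = SF_memD[OF L]
    define l where "l = (\<Prod>p\<in>L. p)"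
    have pfl: "prime_factors l = L" unfolding l_def by (rule pf_prod[OF Lm(1,2)])
    have sql: "squarefree l" unfolding l_def by (rule sqf_prod[OF Lm(1,2)])
    have rl: "real l = (\<Prod>p\<in>L. real p)" unfolding l_def by simp
    have l1: "1 \<le> (\<Prod>p\<in>L. real p)" using Lm by (intro prod_real_ge1) auto
    have y1: "1 \<le> z / real l" using rl l1 Lm(4) by (simp add: field_simps)
    have big: "p \<in> L \<Longrightarrow> real (\<kappa>+1) < real p" for p using Lm(3) by auto
    have psiL: "psi (\<kappa> + 1) l = (\<Prod>p\<in>L. real p - real (\<kappa>+1))"
    proof -
      have bigN: "p \<in> L \<Longrightarrow> \<kappa> + 1 < p" for p using big gt by blast
      have "{p \<in> prime_factors l. \<kappa> + 1 < p} = L" using pfl bigN by blast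
      thus ?thesis unfolding psi_def by simp
    qed
    have den: "0 < (\<Prod>p\<in>L. real p - real (\<kappa>+1)) * (\<Prod>p\<in>L. real p)"
    proof (rule mult_pos_pos)
      show "0 < (\<Prod>p\<in>L. real p - real (\<kappa>+1))" using big by (intro prod_pos) auto
      show "0 < (\<Prod>p\<in>L. real p)" using l1 by linarith
    qed
    have tau_le: "real (tau \<kappa> l) \<le> (\<Prod>p\<in>L. real \<kappa>)"
    proof -
      have "tau \<kappa> l \<le> \<kappa> ^ card L" using tau_bound[OF sql] pfl by simp
      hence "real (tau \<kappa> l) \<le> real \<kappa> ^ card L" by (metis of_nat_le_iff of_nat_power)
      thus ?thesis by simp
    qed
    have WL: "W L = (\<Prod>p\<in>L. real \<kappa>) / ((\<Prod>p\<in>L. real p - real (\<kappa>+1)) * (\<Prod>p\<in>L. real p))"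
      unfolding W_def prod.distrib[symmetric] prod_dividef[symmetric] by (simp add: mult.commute)
    have Tl: "T l = real (tau \<kappa> l) / ((\<Prod>p\<in>L. real p - real (\<kappa>+1)) * (\<Prod>p\<in>L. real p))"
      unfolding T_def psiL rl ..
    have T_le: "T l \<le> W L" unfolding Tl WL using tau_le den by (intro divide_right_mono) auto
    have T_nn: "0 \<le> T l" unfolding Tl using den by simp
    have Ieq: "I (z / real l) = (\<Sum>A\<in>SF (real \<kappa>) (z / real l). (\<Prod>p\<in>A. real \<kappa> / (real p - real \<kappa>)) * ln ((z / real l) / (\<Prod>p\<in>A. real p)))"
      unfolding I_def by (rule integral_Fk[OF y1])
    have CI_nn: "0 \<le> C1 * I (z / real l)" unfolding Ieq
      by (rule mult_nonneg_nonneg[OF C1nn Jk_nonneg])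
    have CI_le: "C1 * I (z / real l) \<le> J (z / real l)" unfolding Ieq C1_def J_def by (rule J_compare)
    have "C1 * (T l * I (z / real l)) = T l * (C1 * I (z / real l))" by simp
    also have "\<dots> \<le> W L * J (z / real l)"
      by (rule mult_mono[OF T_le CI_le]) (use T_le T_nn CI_nn in auto)
    finally show ?thesis unfolding l_def by simp
  qed
  have w0: "\<And>p. prime p \<Longrightarrow> \<kappa> + 1 < p \<Longrightarrow> 0 \<le> real \<kappa> / (real p * (real p - real (\<kappa>+1)))"
    using gt' by (auto intro!: divide_nonneg_pos mult_pos_pos)
  have g0: "\<And>p. prime p \<Longrightarrow> \<kappa> + 1 < p \<Longrightarrow> 0 \<le> real \<kappa> / (real p - real \<kappa>)"
    using gt' by (auto intro!: divide_nonneg_pos)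
  have stepC: "(\<Sum>L\<in>SF (real (\<kappa>+1)) z. W L * J (z / (\<Prod>p\<in>L. real p)))
      \<le> (\<Sum>C\<in>SF (real (\<kappa>+1)) z. (\<Prod>p\<in>C. real \<kappa> / (real p - real (\<kappa>+1))) * ln (z / (\<Prod>p\<in>C. real p)))"
  proof -
    have "(\<Sum>L\<in>SF (real (\<kappa>+1)) z. W L * J (z / (\<Prod>p\<in>L. real p)))
      \<le> (\<Sum>C\<in>SF (real (\<kappa>+1)) z. (\<Prod>p\<in>C. real \<kappa> / (real p * (real p - real (\<kappa>+1))) + real \<kappa> / (real p - real \<kappa>)
           + real \<kappa> / (real p * (real p - real (\<kappa>+1))) * (real \<kappa> / (real p - real \<kappa>))) * ln (z / (\<Prod>p\<in>C. real p)))"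
      unfolding W_def J_def
      by (rule d1[of \<kappa> "\<lambda>p. real \<kappa> / (real p * (real p - real (\<kappa>+1)))" "\<lambda>p. real \<kappa> / (real p - real \<kappa>)" z, OF w0 g0])
    also have "\<dots> = (\<Sum>C\<in>SF (real (\<kappa>+1)) z. (\<Prod>p\<in>C. real \<kappa> / (real p - real (\<kappa>+1))) * ln (z / (\<Prod>p\<in>C. real p)))"
    proof (intro sum.cong refl arg_cong2[where f = "(*)"] prod.cong)
      fix C p assume C: "C \<in> SF (real (\<kappa>+1)) z" and p: "p \<in> C"
      have "\<kappa> + 1 < p" using SF_memD(3)[OF C] p gt by auto
      thus "real \<kappa> / (real p * (real p - real (\<kappa>+1))) + real \<kappa> / (real p - real \<kappa>)
           + real \<kappa> / (real p * (real p - real (\<kappa>+1))) * (real \<kappa> / (real p - real \<kappa>))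
           = real \<kappa> / (real p - real (\<kappa>+1))" by (rule id3)
    qed
    finally show ?thesis .
  qed
  have stepE: "Fk (\<kappa> + 1) z = (\<Sum>S\<in>SF (real (\<kappa>+1)) z. \<Prod>p\<in>S. real (\<kappa>+1) / (real p - real (\<kappa>+1)))"
  proof -
    have "Fk (\<kappa> + 1) z = (\<Sum>S\<in>SF (real (\<kappa>+1)) z. \<Prod>p\<in>prime_factors (\<Prod>p\<in>S. p). real (\<kappa>+1) / (real p - real (\<kappa>+1)))"
      unfolding Fk_def by (rule G1)
    also have "\<dots> = (\<Sum>S\<in>SF (real (\<kappa>+1)) z. \<Prod>p\<in>S. real (\<kappa>+1) / (real p - real (\<kappa>+1)))"
    proof (rule sum.cong[OF refl])
      fix S assume S: "S \<in> SF (real (\<kappa>+1)) z"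
      show "(\<Prod>p\<in>prime_factors (\<Prod>p\<in>S. p). real (\<kappa>+1) / (real p - real (\<kappa>+1)))
          = (\<Prod>p\<in>S. real (\<kappa>+1) / (real p - real (\<kappa>+1)))"
        using pf_prod[OF SF_memD(1,2)[OF S]] by simp
    qed
    finally show ?thesis .
  qed
  have "C1 * (\<Sum>L\<in>SF (real (\<kappa>+1)) z. T (\<Prod>p\<in>L. p) * I (z / real (\<Prod>p\<in>L. p)))
      \<le> (\<Sum>L\<in>SF (real (\<kappa>+1)) z. W L * J (z / (\<Prod>p\<in>L. real p)))"
    unfolding sum_distrib_left by (rule sum_mono) (rule stepB)
  hence "C2 * (C1 * (\<Sum>L\<in>SF (real (\<kappa>+1)) z. T (\<Prod>p\<in>L. p) * I (z / real (\<Prod>p\<in>L. p))))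
      \<le> C2 * (\<Sum>C\<in>SF (real (\<kappa>+1)) z. (\<Prod>p\<in>C. real \<kappa> / (real p - real (\<kappa>+1))) * ln (z / (\<Prod>p\<in>C. real p)))"
    using stepC C2nn by (intro mult_left_mono) auto
  also have "\<dots> \<le> Fk (\<kappa> + 1) z" unfolding stepE C2_def by (rule d2)
  finally have fin: "C2 * (C1 * (\<Sum>L\<in>SF (real (\<kappa>+1)) z. T (\<Prod>p\<in>L. p) * I (z / real (\<Prod>p\<in>L. p)))) \<le> Fk (\<kappa> + 1) z" .
  have e: "(\<Sum>l\<in>{l::nat. 0 < l \<and> real l \<le> z \<and> coprime l (primorial (real (\<kappa> + 1)))}.
         mu2 l * real (tau \<kappa> l) / (psi (\<kappa> + 1) l * real l)
         * integral {1 .. z / real l} (\<lambda>t. Fk \<kappa> t / t))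
      = (\<Sum>L\<in>SF (real (\<kappa>+1)) z. T (\<Prod>p\<in>L. p) * I (z / real (\<Prod>p\<in>L. p)))"
    using stepA by (simp only: I_def)
  show ?thesis unfolding e C1_def[symmetric] C2_def[symmetric]
    using fin by (simp only: mult.assoc mult.left_commute[of C1 C2])
qed

end
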